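(* Let $(\mathcal C,\otimes,I,a,l,r)$ be a monoidal category, $(F,\Delta,\varepsilon,F_2,F_0)$ and $(G,\delta,\epsilon,G_2,G_0)$ bicomonads on $\mathcal C$, and $\varphi:FG\to GF$ a comonad distributive law. The following are equivalent: (1) $(\mathcal C^{(F,G)}(\varphi),\otimes,I,a,l,r)$ is a monoidal category, where for bicomodules $X,Y$ the coactions on $X\otimes Y$ are $F_2(X,Y)\circ(\theta^X\otimes\theta^Y)$ and $G_2(X,Y)\circ(\rho^X\otimes\rho^Y)$ and $I$ has coactions $F_0,G_0$; (2) $\varphi$ is a monoidal comonad distributive law; (3) the smash coproduct $FG$ (comultiplication $F\varphi_{GX}\circ FF\delta_X\circ\Delta_{GX}$, counit $\epsilon_X\circ\varepsilon_{GX}$, monoidal structure $(FG)_2(M,N)=F(G_2(M,N))\circ F_2(GM,GN)$, $(FG)_0=F(G_0)\circ F_0$) is a bicomonad; (4) in the 2-category $\mathbf{Cmd}(\mathbf{Cat})$, $F_2$ is a 2-cell from the 1-cell $(\otimes\circ(F\times F),w)$ to the 1-cell $(F\circ\otimes,w')$, both from $(\mathcal C\times\mathcal C,G\times G,\delta\times\delta,\epsilon\times\epsilon)$ to $(\mathcal C,G,\delta,\epsilon)$, where $w_{(X,Y)}=G_2(FX,FY)\circ(\varphi_X\otimes\varphi_Y)$ and $w'_{(X,Y)}=\varphi_{X\otimes Y}\circ F(G_2(X,Y))$; and $F_0$ is a 2-cell from the 1-cell $(I,G_0)$ to the 1-cell $(FI,\varphi_I\circ F(G_0))$, both from $(\mathfrak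 I,\mathrm{id},\mathrm{id},\mathrm{id})$ to $(\mathcal C,G,\delta,\epsilon)$, where $\mathfrak I$ is the terminal category; (5) $(\otimes,F_2,G_2):(\mathcal C\times\mathcal C,F\times F,G\times G,\varphi\times\varphi)\to(\mathcal C,F,G,\varphi)$ and $(I,F_0,G_0):(\mathfrak I,\mathrm{id},\mathrm{id},\mathrm{id})\to(\mathcal C,F,G,\varphi)$ are 1-cells in $\mathbf{CC}(\mathbf{Cat})$.
   Context: Comonads, comonad distributive laws $\varphi:FG\to GF$ (conditions $G\varphi\circ\varphi G\circ F\delta=\delta F\circ\varphi$, $\varphi F\circ F\varphi\circ\Delta G=G\Delta\circ\varphi$, $G\varepsilon\circ\varphi=\varepsilon G$, $\epsilon F\circ\varphi=F\epsilon$), $\varphi$-bicomodules $(M,\theta^M,\rho^M)$ ($F$-comodule and $G$-comodule with $\varphi_M\circ F\rho^M\circ\theta^M=G\theta^M\circ\rho^M$) forming the category $\mathcal C^{(F,G)}(\varphi)$, and bicomonads (comonads that are monoidal functors $(G,G_2,G_0)$ with $G(G_2(X,Y))\circ G_2(GX,GY)\circ(\delta_X\otimes\delta_Y)=\delta_{X\otimes Y}\circ G_2(X,Y)$, $\epsilon_{X\otimes Y}\circ G_2=\epsilon_X\otimes\epsilon_Y$, $G(G_0)\circ G_0=\delta_I\circ G_0$, $\epsilon_I\circ G_0=\mathrm{id}_I$) are as usual. $\varphi$ is a monoidal comonad distributive law if $\varphi_{M\otimes N}\circ F(G_2(M,N))\circ F_2(GM,GN)=G(F_2(M,N))\circ G_2(FM,FN)\circ(\varphi_M\otimes\varphi_N)$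 and $\varphi_I\circ F(G_0)\circ F_0=G(F_0)\circ G_0$. The 2-category $\mathbf{Cmd}(\mathbb C)$ (for a 2-category $\mathbb C$, here $\mathbf{Cat}$): 0-cells are comonads $(Y,T,\delta,\epsilon)$ on objects $Y$; a 1-cell $(Y,T,\delta,\epsilon)\to(Y',T',\delta',\epsilon')$ is a pair $(W,w)$ with $W:Y\to Y'$ and $w:WT\Rightarrow T'W$ satisfying $\delta'W\circ w=T'w\circ wT\circ W\delta$ and $\epsilon'W\circ w=W\epsilon$; a 2-cell $(W,w)\Rightarrow(V,v)$ is $\chi:W\Rightarrow V$ with $v\circ\chi T=T'\chi\circ w$. The 2-category $\mathbf{CC}(\mathbb C)$: 0-cells $(C,D,T,\varphi)$ with $D=(D,\Delta,\varepsilon)$, $T=(T,\delta,\epsilon)$ comonads on $C$ and $\varphi:DT\Rightarrow TD$ a comonad distributive law; a 1-cell $(C,D,T,\varphi)\to(C',D',T',\varphi')$ is $(J,j_d,j_t)$ with $J:C\to C'$, $j_d:JD\Rightarrow D'J$, $j_t:JT\Rightarrow T'J$ satisfying $\Delta'J\circ j_d=D'j_d\circ j_dD\circ J\Delta$, $J\varepsilon=\varepsilon'J\circ j_d$, $\delta'J\circ j_t=T'j_t\circ j_tT\circ J\delta$, $J\epsilon=\epsilon'J\circ j_t$, and $T'j_d\circ j_tD\circ J\varphi=\varphi'J\circ D'j_t\circ j_dT$ as maps $JDT\Rightarrow T'D'J$. *)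

theory Defs
  imports Main
begin

record ('o,'a) cat =
  Ob  :: "'o set"
  Ar  :: "'a set"
  src :: "'a \<Rightarrow> 'o"
  tgt :: "'a \<Rightarrow> 'o"
  cmp :: "'a \<Rightarrow> 'a \<Rightarrow> 'a"   (* cmp C g f = g \<circ> f *)
  idn :: "'o \<Rightarrow> 'a"

definition hom :: "('o,'a,'z) cat_scheme \<Rightarrow> 'o \<Rightarrow> 'o \<Rightarrow> 'a set" where
  "hom C X Y = {f \<in> Ar C. src C f = X \<and> tgt C f = Y}"

definition is_category :: "('o,'a,'z) cat_scheme \<Rightarrow> bool" where
  "is_category C \<longleftrightarrow>
     (\<forall>f\<in>Ar C. src C f \<in> Ob C \<and> tgt C f \<in> Ob C) \<and>
     (\<forall>X\<in>Ob C. idn C X \<in> hom C X X) \<and>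
     (\<forall>f\<in>Ar C. \<forall>g\<in>Ar C. tgt C f = src C g \<longrightarrow> cmp C g f \<in> hom C (src C f) (tgt C g)) \<and>
     (\<forall>f\<in>Ar C. cmp C (idn C (tgt C f)) f = f \<and> cmp C f (idn C (src C f)) = f) \<and>
     (\<forall>f\<in>Ar C. \<forall>g\<in>Ar C. \<forall>h\<in>Ar C. tgt C f = src C g \<and> tgt C g = src C h \<longrightarrow>
        cmp C h (cmp C g f) = cmp C (cmp C h g) f)"

definition is_iso :: "('o,'a,'z) cat_scheme \<Rightarrow> 'a \<Rightarrow> bool" where
  "is_iso C f \<longleftrightarrow> f \<in> Ar C \<and>
     (\<exists>g\<in>hom C (tgt C f) (src C f). cmp C g f = idn C (src C f) \<and> cmp C f g = idn C (tgt C f))"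

record ('o,'a,'p,'b) ftr =
  fo :: "'o \<Rightarrow> 'p"
  fa :: "'a \<Rightarrow> 'b"

definition is_functor :: "('o,'a,'z) cat_scheme \<Rightarrow> ('p,'b,'y) cat_scheme \<Rightarrow> ('o,'a,'p,'b) ftr \<Rightarrow> bool" where
  "is_functor C D F \<longleftrightarrow>
     (\<forall>X\<in>Ob C. fo F X \<in> Ob D) \<and>
     (\<forall>f\<in>Ar C. fa F f \<in> hom D (fo F (src C f)) (fo F (tgt C f))) \<and>
     (\<forall>X\<in>Ob C. fa F (idn C X) = idn D (fo F X)) \<and>
     (\<forall>f\<in>Ar C. \<forall>g\<in>Ar C. tgt C f = src C g \<longrightarrow> fa F (cmp C g f) = cmp D (fa F g) (fa F f))"

definition nat_trans :: "('o,'a,'z) cat_scheme \<Rightarrow> ('p,'b,'y) cat_scheme \<Rightarrow>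
    ('o,'a,'p,'b) ftr \<Rightarrow> ('o,'a,'p,'b) ftr \<Rightarrow> ('o \<Rightarrow> 'b) \<Rightarrow> bool" where
  "nat_trans C D F G \<eta> \<longleftrightarrow>
     (\<forall>X\<in>Ob C. \<eta> X \<in> hom D (fo F X) (fo G X)) \<and>
     (\<forall>f\<in>Ar C. cmp D (\<eta> (tgt C f)) (fa F f) = cmp D (fa G f) (\<eta> (src C f)))"

definition fcomp :: "('p,'b,'q,'c) ftr \<Rightarrow> ('o,'a,'p,'b) ftr \<Rightarrow> ('o,'a,'q,'c) ftr" where
  "fcomp G F = \<lparr>fo = fo G \<circ> fo F, fa = fa G \<circ> fa F\<rparr>"

definition id_ftr :: "('o,'a,'o,'a) ftr" where
  "id_ftr = \<lparr>fo = id, fa = id\<rparr>"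

definition comonad :: "('o,'a,'z) cat_scheme \<Rightarrow> ('o,'a,'o,'a) ftr \<Rightarrow> ('o \<Rightarrow> 'a) \<Rightarrow> ('o \<Rightarrow> 'a) \<Rightarrow> bool" where
  "comonad C T \<delta> e \<longleftrightarrow>
     is_functor C C T \<and> nat_trans C C T (fcomp T T) \<delta> \<and> nat_trans C C T id_ftr e \<and>
     (\<forall>X\<in>Ob C. cmp C (\<delta> (fo T X)) (\<delta> X) = cmp C (fa T (\<delta> X)) (\<delta> X) \<and>
                cmp C (e (fo T X)) (\<delta> X) = idn C (fo T X) \<and>
                cmp C (fa T (e X)) (\<delta> X) = idn C (fo T X))"

definition dist_law :: "('o,'a,'z) cat_scheme \<Rightarrow>
    ('o,'a,'o,'a) ftr \<Rightarrow> ('o \<Rightarrow> 'a) \<Rightarrow> ('o \<Rightarrow> 'a) \<Rightarrow>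
    ('o,'a,'o,'a) ftr \<Rightarrow> ('o \<Rightarrow> 'a) \<Rightarrow> ('o \<Rightarrow> 'a) \<Rightarrow> ('o \<Rightarrow> 'a) \<Rightarrow> bool" where
  "dist_law C F DF eF G dG eG \<phi> \<longleftrightarrow>
     nat_trans C C (fcomp F G) (fcomp G F) \<phi> \<and>
     (\<forall>X\<in>Ob C.
        cmp C (fa G (\<phi> X)) (cmp C (\<phi> (fo G X)) (fa F (dG X))) = cmp C (dG (fo F X)) (\<phi> X) \<and>
        cmp C (\<phi> (fo F X)) (cmp C (fa F (\<phi> X)) (DF (fo G X))) = cmp C (fa G (DF X)) (\<phi> X) \<and>
        cmp C (fa G (eF X)) (\<phi> X) = eF (fo G X) \<and>
        cmp C (eG (fo F X)) (\<phi> X) = fa F (eG X))"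

record ('o,'a) moncat = "('o,'a) cat" +
  tns   :: "'o \<Rightarrow> 'o \<Rightarrow> 'o"
  tnsa  :: "'a \<Rightarrow> 'a \<Rightarrow> 'a"
  munit :: "'o"
  asc   :: "'o \<Rightarrow> 'o \<Rightarrow> 'o \<Rightarrow> 'a"
  lu    :: "'o \<Rightarrow> 'a"
  ru    :: "'o \<Rightarrow> 'a"

definition monoidal_category :: "('o,'a,'z) moncat_scheme \<Rightarrow> bool" where
  "monoidal_category M \<longleftrightarrow>
     is_category M \<and>
     munit M \<in> Ob M \<and>
     (\<forall>X\<in>Ob M. \<forall>Y\<in>Ob M. tns M X Y \<in> Ob M) \<and>
     (\<forall>f\<in>Ar M. \<forall>g\<in>Ar M. tnsa M f g \<in> hom M (tns M (src M f) (src M g)) (tns M (tgt M f) (tgt M g))) \<and>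
     (\<forall>X\<in>Ob M. \<forall>Y\<in>Ob M. tnsa M (idn M X) (idn M Y) = idn M (tns M X Y)) \<and>
     (\<forall>f\<in>Ar M. \<forall>g\<in>Ar M. \<forall>f'\<in>Ar M. \<forall>g'\<in>Ar M. tgt M f = src M g \<and> tgt M f' = src M g' \<longrightarrow>
        tnsa M (cmp M g f) (cmp M g' f') = cmp M (tnsa M g g') (tnsa M f f')) \<and>
     (\<forall>X\<in>Ob M. \<forall>Y\<in>Ob M. \<forall>Z\<in>Ob M.
        asc M X Y Z \<in> hom M (tns M (tns M X Y) Z) (tns M X (tns M Y Z)) \<and> is_iso M (asc M X Y Z)) \<and>
     (\<forall>X\<in>Ob M. lu M X \<in> hom M (tns M (munit M) X) X \<and> is_iso M (lu M X) \<and>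
                ru M X \<in> hom M (tns M X (munit M)) X \<and> is_iso M (ru M X)) \<and>
     (\<forall>f\<in>Ar M. \<forall>g\<in>Ar M. \<forall>h\<in>Ar M.
        cmp M (asc M (tgt M f) (tgt M g) (tgt M h)) (tnsa M (tnsa M f g) h) =
        cmp M (tnsa M f (tnsa M g h)) (asc M (src M f) (src M g) (src M h))) \<and>
     (\<forall>f\<in>Ar M. cmp M (lu M (tgt M f)) (tnsa M (idn M (munit M)) f) = cmp M f (lu M (src M f)) \<and>
                cmp M (ru M (tgt M f)) (tnsa M f (idn M (munit M))) = cmp M f (ru M (src M f))) \<and>
     (\<forall>W\<in>Ob M. \<forall>X\<in>Ob M. \<forall>Y\<in>Ob M. \<forall>Z\<in>Ob M.
        cmp M (tnsa M (idn M W) (asc M X Y Z))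
          (cmp M (asc M W (tns M X Y) Z) (tnsa M (asc M W X Y) (idn M Z))) =
        cmp M (asc M W X (tns M Y Z)) (asc M (tns M W X) Y Z)) \<and>
     (\<forall>X\<in>Ob M. \<forall>Y\<in>Ob M.
        cmp M (tnsa M (idn M X) (lu M Y)) (asc M X (munit M) Y) = tnsa M (ru M X) (idn M Y))"

definition monoidal_functor :: "('o,'a,'z) moncat_scheme \<Rightarrow> ('o,'a,'o,'a) ftr \<Rightarrow>
    ('o \<Rightarrow> 'o \<Rightarrow> 'a) \<Rightarrow> 'a \<Rightarrow> bool" where
  "monoidal_functor M F F2 F0 \<longleftrightarrow>
     is_functor M M F \<and>
     (\<forall>X\<in>Ob M. \<forall>Y\<in>Ob M. F2 X Y \<in> hom M (tns M (fo F X) (fo F Y)) (fo F (tns M X Y))) \<and>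
     (\<forall>f\<in>Ar M. \<forall>g\<in>Ar M.
        cmp M (F2 (tgt M f) (tgt M g)) (tnsa M (fa F f) (fa F g)) =
        cmp M (fa F (tnsa M f g)) (F2 (src M f) (src M g))) \<and>
     F0 \<in> hom M (munit M) (fo F (munit M)) \<and>
     (\<forall>X\<in>Ob M. \<forall>Y\<in>Ob M. \<forall>Z\<in>Ob M.
        cmp M (fa F (asc M X Y Z)) (cmp M (F2 (tns M X Y) Z) (tnsa M (F2 X Y) (idn M (fo F Z)))) =
        cmp M (F2 X (tns M Y Z)) (cmp M (tnsa M (idn M (fo F X)) (F2 Y Z)) (asc M (fo F X) (fo F Y) (fo F Z)))) \<and>
     (\<forall>X\<in>Ob M.
        cmp M (fa F (lu M X)) (cmp M (F2 (munit M) X) (tnsa M F0 (idn M (fo F X)))) = lu M (fo F X) \<and>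
        cmp M (fa F (ru M X)) (cmp M (F2 X (munit M)) (tnsa M (idn M (fo F X)) F0)) = ru M (fo F X))"

definition bicomonad :: "('o,'a,'z) moncat_scheme \<Rightarrow> ('o,'a,'o,'a) ftr \<Rightarrow> ('o \<Rightarrow> 'a) \<Rightarrow> ('o \<Rightarrow> 'a) \<Rightarrow>
    ('o \<Rightarrow> 'o \<Rightarrow> 'a) \<Rightarrow> 'a \<Rightarrow> bool" where
  "bicomonad M G d e G2 G0 \<longleftrightarrow>
     comonad M G d e \<and> monoidal_functor M G G2 G0 \<and>
     (\<forall>X\<in>Ob M. \<forall>Y\<in>Ob M.
        cmp M (fa G (G2 X Y)) (cmp M (G2 (fo G X) (fo G Y)) (tnsa M (d X) (d Y))) =
          cmp M (d (tns M X Y)) (G2 X Y) \<and>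
        cmp M (e (tns M X Y)) (G2 X Y) = tnsa M (e X) (e Y)) \<and>
     cmp M (fa G G0) G0 = cmp M (d (munit M)) G0 \<and>
     cmp M (e (munit M)) G0 = idn M (munit M)"

definition monoidal_dist_law :: "('o,'a,'z) moncat_scheme \<Rightarrow>
    ('o,'a,'o,'a) ftr \<Rightarrow> ('o \<Rightarrow> 'o \<Rightarrow> 'a) \<Rightarrow> 'a \<Rightarrow>
    ('o,'a,'o,'a) ftr \<Rightarrow> ('o \<Rightarrow> 'o \<Rightarrow> 'a) \<Rightarrow> 'a \<Rightarrow> ('o \<Rightarrow> 'a) \<Rightarrow> bool" where
  "monoidal_dist_law M F F2 F0 G G2 G0 \<phi> \<longleftrightarrow>
     (\<forall>X\<in>Ob M. \<forall>Y\<in>Ob M.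
        cmp M (\<phi> (tns M X Y)) (cmp M (fa F (G2 X Y)) (F2 (fo G X) (fo G Y))) =
        cmp M (fa G (F2 X Y)) (cmp M (G2 (fo F X) (fo F Y)) (tnsa M (\<phi> X) (\<phi> Y)))) \<and>
     cmp M (\<phi> (munit M)) (cmp M (fa F G0) F0) = cmp M (fa G F0) G0"

section \<open>phi-bicomodules and the monoidal category C^(F,G)(phi)\<close>

definition is_bicomod :: "('o,'a,'z) cat_scheme \<Rightarrow>
    ('o,'a,'o,'a) ftr \<Rightarrow> ('o \<Rightarrow> 'a) \<Rightarrow> ('o \<Rightarrow> 'a) \<Rightarrow>
    ('o,'a,'o,'a) ftr \<Rightarrow> ('o \<Rightarrow> 'a) \<Rightarrow> ('o \<Rightarrow> 'a) \<Rightarrow> ('o \<Rightarrow> 'a) \<Rightarrow> 'o \<times> 'a \<times> 'a \<Rightarrow> bool" where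
  "is_bicomod C F DF eF G dG eG \<phi> A \<longleftrightarrow>
     (case A of (X, \<theta>, \<rho>) \<Rightarrow>
        X \<in> Ob C \<and> \<theta> \<in> hom C X (fo F X) \<and> \<rho> \<in> hom C X (fo G X) \<and>
        cmp C (DF X) \<theta> = cmp C (fa F \<theta>) \<theta> \<and> cmp C (eF X) \<theta> = idn C X \<and>
        cmp C (dG X) \<rho> = cmp C (fa G \<rho>) \<rho> \<and> cmp C (eG X) \<rho> = idn C X \<and>
        cmp C (\<phi> X) (cmp C (fa F \<rho>) \<theta>) = cmp C (fa G \<theta>) \<rho>)"

definition is_bicomod_mor :: "('o,'a,'z) cat_scheme \<Rightarrow> ('o,'a,'o,'a) ftr \<Rightarrow> ('o,'a,'o,'a) ftr \<Rightarrow>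
    'o \<times> 'a \<times> 'a \<Rightarrow> 'a \<Rightarrow> 'o \<times> 'a \<times> 'a \<Rightarrow> bool" where
  "is_bicomod_mor C F G A f B \<longleftrightarrow>
     (case A of (X, \<theta>, \<rho>) \<Rightarrow> case B of (Y, \<theta>', \<rho>') \<Rightarrow>
        f \<in> hom C X Y \<and> cmp C \<theta>' f = cmp C (fa F f) \<theta> \<and> cmp C \<rho>' f = cmp C (fa G f) \<rho>)"

definition bc_tns :: "('o,'a,'z) moncat_scheme \<Rightarrow> ('o \<Rightarrow> 'o \<Rightarrow> 'a) \<Rightarrow> ('o \<Rightarrow> 'o \<Rightarrow> 'a) \<Rightarrow>
    'o \<times> 'a \<times> 'a \<Rightarrow> 'o \<times> 'a \<times> 'a \<Rightarrow> 'o \<times> 'a \<times> 'a" where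
  "bc_tns M F2 G2 A B =
     (case A of (X, \<theta>, \<rho>) \<Rightarrow> case B of (Y, \<theta>', \<rho>') \<Rightarrow>
        (tns M X Y, cmp M (F2 X Y) (tnsa M \<theta> \<theta>'), cmp M (G2 X Y) (tnsa M \<rho> \<rho>')))"

definition bicomod_moncat :: "('o,'a,'z) moncat_scheme \<Rightarrow>
    ('o,'a,'o,'a) ftr \<Rightarrow> ('o \<Rightarrow> 'a) \<Rightarrow> ('o \<Rightarrow> 'a) \<Rightarrow> ('o \<Rightarrow> 'o \<Rightarrow> 'a) \<Rightarrow> 'a \<Rightarrow>
    ('o,'a,'o,'a) ftr \<Rightarrow> ('o \<Rightarrow> 'a) \<Rightarrow> ('o \<Rightarrow> 'a) \<Rightarrow> ('o \<Rightarrow> 'o \<Rightarrow> 'a) \<Rightarrow> 'a \<Rightarrow> ('o \<Rightarrow> 'a) \<Rightarrow>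
    ('o \<times> 'a \<times> 'a, ('o \<times> 'a \<times> 'a) \<times> 'a \<times> ('o \<times> 'a \<times> 'a)) moncat" where
  "bicomod_moncat M F DF eF F2 F0 G dG eG G2 G0 \<phi> =
     (let U = (munit M, F0, G0);
          T = bc_tns M F2 G2
      in \<lparr> Ob = {A. is_bicomod M F DF eF G dG eG \<phi> A},
           Ar = {(A, f, B). is_bicomod M F DF eF G dG eG \<phi> A \<and> is_bicomod M F DF eF G dG eG \<phi> B \<and>
                            is_bicomod_mor M F G A f B},
           src = fst,
           tgt = (\<lambda>t. snd (snd t)),
           cmp = (\<lambda>g f. (fst f, cmp M (fst (snd g)) (fst (snd f)), snd (snd g))),
           idn = (\<lambda>A. (A, idn M (fst A), A)),
           tns = T,
           tnsa = (\<lambda>f g. (T (fst f) (fst g), tnsa M (fst (snd f)) (fst (snd g)),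
                           T (snd (snd f)) (snd (snd g)))),
           munit = U,
           asc = (\<lambda>A B C. (T (T A B) C, asc M (fst A) (fst B) (fst C), T A (T B C))),
           lu = (\<lambda>A. (T U A, lu M (fst A), A)),
           ru = (\<lambda>A. (T A U, ru M (fst A), A)) \<rparr>)"

section \<open>Smash coproduct FG\<close>

definition smash_comult :: "('o,'a,'z) cat_scheme \<Rightarrow> ('o,'a,'o,'a) ftr \<Rightarrow> ('o \<Rightarrow> 'a) \<Rightarrow>
    ('o,'a,'o,'a) ftr \<Rightarrow> ('o \<Rightarrow> 'a) \<Rightarrow> ('o \<Rightarrow> 'a) \<Rightarrow> 'o \<Rightarrow> 'a" where
  "smash_comult C F DF G dG \<phi> X =
     cmp C (fa F (\<phi> (fo G X))) (cmp C (fa F (fa F (dG X))) (DF (fo G X)))"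

definition smash_counit :: "('o,'a,'z) cat_scheme \<Rightarrow> ('o \<Rightarrow> 'a) \<Rightarrow> ('o,'a,'o,'a) ftr \<Rightarrow> ('o \<Rightarrow> 'a) \<Rightarrow> 'o \<Rightarrow> 'a" where
  "smash_counit C eF G eG X = cmp C (eG X) (eF (fo G X))"

definition smash_F2 :: "('o,'a,'z) moncat_scheme \<Rightarrow> ('o,'a,'o,'a) ftr \<Rightarrow> ('o \<Rightarrow> 'o \<Rightarrow> 'a) \<Rightarrow>
    ('o,'a,'o,'a) ftr \<Rightarrow> ('o \<Rightarrow> 'o \<Rightarrow> 'a) \<Rightarrow> 'o \<Rightarrow> 'o \<Rightarrow> 'a" where
  "smash_F2 M F F2 G G2 X Y = cmp M (fa F (G2 X Y)) (F2 (fo G X) (fo G Y))"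

definition smash_F0 :: "('o,'a,'z) moncat_scheme \<Rightarrow> ('o,'a,'o,'a) ftr \<Rightarrow> 'a \<Rightarrow> 'a \<Rightarrow> 'a" where
  "smash_F0 M F F0 G0 = cmp M (fa F G0) F0"

definition prod_cat :: "('o,'a,'z) cat_scheme \<Rightarrow> ('p,'b,'y) cat_scheme \<Rightarrow> ('o \<times> 'p, 'a \<times> 'b) cat" where
  "prod_cat C D = \<lparr> Ob = Ob C \<times> Ob D, Ar = Ar C \<times> Ar D,
     src = (\<lambda>(f, g). (src C f, src D g)), tgt = (\<lambda>(f, g). (tgt C f, tgt D g)),
     cmp = (\<lambda>(g, g') (f, f'). (cmp C g f, cmp D g' f')),
     idn = (\<lambda>(X, Y). (idn C X, idn D Y)) \<rparr>"

definition term_cat :: "(unit, unit) cat" where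
  "term_cat = \<lparr> Ob = UNIV, Ar = UNIV, src = (\<lambda>_. ()), tgt = (\<lambda>_. ()), cmp = (\<lambda>_ _. ()), idn = (\<lambda>_. ()) \<rparr>"

definition prod_ftr :: "('o,'a,'p,'b) ftr \<Rightarrow> ('q,'c,'r,'d) ftr \<Rightarrow> ('o \<times> 'q, 'a \<times> 'c, 'p \<times> 'r, 'b \<times> 'd) ftr" where
  "prod_ftr F G = \<lparr> fo = (\<lambda>(X, Y). (fo F X, fo G Y)), fa = (\<lambda>(f, g). (fa F f, fa G g)) \<rparr>"

definition prod_nt :: "('o \<Rightarrow> 'a) \<Rightarrow> ('p \<Rightarrow> 'b) \<Rightarrow> 'o \<times> 'p \<Rightarrow> 'a \<times> 'b" where
  "prod_nt \<eta> \<mu> = (\<lambda>(X, Y). (\<eta> X, \<mu> Y))"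

definition tens_ftr :: "('o,'a,'z) moncat_scheme \<Rightarrow> ('o \<times> 'o, 'a \<times> 'a, 'o, 'a) ftr" where
  "tens_ftr M = \<lparr> fo = (\<lambda>(X, Y). tns M X Y), fa = (\<lambda>(f, g). tnsa M f g) \<rparr>"

definition unit_ftr :: "('o,'a,'z) moncat_scheme \<Rightarrow> (unit, unit, 'o, 'a) ftr" where
  "unit_ftr M = \<lparr> fo = (\<lambda>_. munit M), fa = (\<lambda>_. idn M (munit M)) \<rparr>"

section \<open>The 2-categories Cmd(Cat) and CC(Cat): 1-cells and 2-cells\<close>

definition cmd_1cell :: "('o,'a,'z) cat_scheme \<Rightarrow> ('o,'a,'o,'a) ftr \<Rightarrow> ('o \<Rightarrow> 'a) \<Rightarrow> ('o \<Rightarrow> 'a) \<Rightarrow>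
    ('p,'b,'y) cat_scheme \<Rightarrow> ('p,'b,'p,'b) ftr \<Rightarrow> ('p \<Rightarrow> 'b) \<Rightarrow> ('p \<Rightarrow> 'b) \<Rightarrow>
    ('o,'a,'p,'b) ftr \<Rightarrow> ('o \<Rightarrow> 'b) \<Rightarrow> bool" where
  "cmd_1cell Y T d e Y' T' d' e' W w \<longleftrightarrow>
     comonad Y T d e \<and> comonad Y' T' d' e' \<and>
     is_functor Y Y' W \<and> nat_trans Y Y' (fcomp W T) (fcomp T' W) w \<and>
     (\<forall>X\<in>Ob Y.
        cmp Y' (d' (fo W X)) (w X) = cmp Y' (fa T' (w X)) (cmp Y' (w (fo T X)) (fa W (d X))) \<and>
        cmp Y' (e' (fo W X)) (w X) = fa W (e X))"

definition cmd_2cell :: "('o,'a,'z) cat_scheme \<Rightarrow> ('o,'a,'o,'a) ftr \<Rightarrow> ('o \<Rightarrow> 'a) \<Rightarrow> ('o \<Rightarrow> 'a) \<Rightarrow>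
    ('p,'b,'y) cat_scheme \<Rightarrow> ('p,'b,'p,'b) ftr \<Rightarrow> ('p \<Rightarrow> 'b) \<Rightarrow> ('p \<Rightarrow> 'b) \<Rightarrow>
    ('o,'a,'p,'b) ftr \<Rightarrow> ('o \<Rightarrow> 'b) \<Rightarrow> ('o,'a,'p,'b) ftr \<Rightarrow> ('o \<Rightarrow> 'b) \<Rightarrow> ('o \<Rightarrow> 'b) \<Rightarrow> bool" where
  "cmd_2cell Y T d e Y' T' d' e' W w V v \<chi> \<longleftrightarrow>
     cmd_1cell Y T d e Y' T' d' e' W w \<and> cmd_1cell Y T d e Y' T' d' e' V v \<and>
     nat_trans Y Y' W V \<chi> \<and>
     (\<forall>X\<in>Ob Y. cmp Y' (v X) (\<chi> (fo T X)) = cmp Y' (fa T' (\<chi> X)) (w X))"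

definition cc_0cell :: "('o,'a,'z) cat_scheme \<Rightarrow> ('o,'a,'o,'a) ftr \<Rightarrow> ('o \<Rightarrow> 'a) \<Rightarrow> ('o \<Rightarrow> 'a) \<Rightarrow>
    ('o,'a,'o,'a) ftr \<Rightarrow> ('o \<Rightarrow> 'a) \<Rightarrow> ('o \<Rightarrow> 'a) \<Rightarrow> ('o \<Rightarrow> 'a) \<Rightarrow> bool" where
  "cc_0cell C D DD eD T dT eT \<phi> \<longleftrightarrow>
     comonad C D DD eD \<and> comonad C T dT eT \<and> dist_law C D DD eD T dT eT \<phi>"

definition cc_1cell :: "('o,'a,'z) cat_scheme \<Rightarrow> ('o,'a,'o,'a) ftr \<Rightarrow> ('o \<Rightarrow> 'a) \<Rightarrow> ('o \<Rightarrow> 'a) \<Rightarrow>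
    ('o,'a,'o,'a) ftr \<Rightarrow> ('o \<Rightarrow> 'a) \<Rightarrow> ('o \<Rightarrow> 'a) \<Rightarrow> ('o \<Rightarrow> 'a) \<Rightarrow>
    ('p,'b,'y) cat_scheme \<Rightarrow> ('p,'b,'p,'b) ftr \<Rightarrow> ('p \<Rightarrow> 'b) \<Rightarrow> ('p \<Rightarrow> 'b) \<Rightarrow>
    ('p,'b,'p,'b) ftr \<Rightarrow> ('p \<Rightarrow> 'b) \<Rightarrow> ('p \<Rightarrow> 'b) \<Rightarrow> ('p \<Rightarrow> 'b) \<Rightarrow>
    ('o,'a,'p,'b) ftr \<Rightarrow> ('o \<Rightarrow> 'b) \<Rightarrow> ('o \<Rightarrow> 'b) \<Rightarrow> bool" where
  "cc_1cell C D DD eD T dT eT \<phi> C' D' DD' eD' T' dT' eT' \<phi>' J jd jt \<longleftrightarrow>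
     cc_0cell C D DD eD T dT eT \<phi> \<and> cc_0cell C' D' DD' eD' T' dT' eT' \<phi>' \<and>
     cmd_1cell C D DD eD C' D' DD' eD' J jd \<and>
     cmd_1cell C T dT eT C' T' dT' eT' J jt \<and>
     (\<forall>X\<in>Ob C.
        cmp C' (fa T' (jd X)) (cmp C' (jt (fo D X)) (fa J (\<phi> X))) =
        cmp C' (\<phi>' (fo J X)) (cmp C' (fa D' (jt X)) (jd (fo T X))))"

end

theory Submission
  imports Defs
begin


lemma fcomp_simps[simp]: "fo (fcomp A B) X = fo A (fo B X)" "fa (fcomp A B) f = fa A (fa B f)"
  "fo id_ftr X = X" "fa id_ftr f = f"
  unfolding fcomp_def id_ftr_def by simp_all

lemma pc_simps[simp]: "Ob (prod_cat A B) = Ob A \<times> Ob B" "Ar (prod_cat A B) = Ar A \<times> Ar B"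
  "src (prod_cat A B) (f, g) = (src A f, src B g)" "tgt (prod_cat A B) (f, g) = (tgt A f, tgt B g)"
  "cmp (prod_cat A B) (f, g) (f', g') = (cmp A f f', cmp B g g')"
  "idn (prod_cat A B) (X, Y) = (idn A X, idn B Y)"
  unfolding prod_cat_def by simp_all
lemma pf_simps[simp]: "fo (prod_ftr F G) (X, Y) = (fo F X, fo G Y)" "fa (prod_ftr F G) (f, g) = (fa F f, fa G g)"
  "prod_nt \<eta> \<mu> (X, Y) = (\<eta> X, \<mu> Y)"
  unfolding prod_ftr_def prod_nt_def by simp_all
lemma tf_simps[simp]: "fo (tens_ftr M) (X, Y) = tns M X Y" "fa (tens_ftr M) (f, g) = tnsa M f g"
  "fo (unit_ftr M) u = munit M" "fa (unit_ftr M) v = idn M (munit M)"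
  unfolding tens_ftr_def unit_ftr_def by simp_all
lemma tc_simps[simp]: "Ob term_cat = UNIV" "Ar term_cat = UNIV" "src term_cat x = ()" "tgt term_cat x = ()"
  "cmp term_cat x y = ()" "idn term_cat u = ()"
  unfolding term_cat_def by simp_all

lemma hom_iff: "f \<in> hom C X Y \<longleftrightarrow> f \<in> Ar C \<and> src C f = X \<and> tgt C f = Y"
  unfolding hom_def by simp

lemma term_comonad: "comonad term_cat id_ftr (\<lambda>_. ()) (\<lambda>_. ())"
  unfolding comonad_def is_functor_def nat_trans_def hom_iff by simp

lemma prod_comonad: "comonad C T d e \<Longrightarrow> comonad (prod_cat C C) (prod_ftr T T) (prod_nt d d) (prod_nt e e)"
  unfolding comonad_def is_functor_def nat_trans_def hom_iff by auto

lemma prod_dist: "dist_law C A DA eA B dB eB \<psi> \<Longrightarrow>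
   dist_law (prod_cat C C) (prod_ftr A A) (prod_nt DA DA) (prod_nt eA eA) (prod_ftr B B) (prod_nt dB dB) (prod_nt eB eB) (prod_nt \<psi> \<psi>)"
  unfolding dist_law_def nat_trans_def hom_iff by auto

lemma term_dist: "dist_law term_cat id_ftr (\<lambda>_. ()) (\<lambda>_. ()) id_ftr (\<lambda>_. ()) (\<lambda>_. ()) (\<lambda>_. ())"
  unfolding dist_law_def nat_trans_def hom_iff by simp


lemma nat_trans_prodI:
  assumes "\<And>X Y. X \<in> Ob C \<Longrightarrow> Y \<in> Ob C \<Longrightarrow> \<eta> (X, Y) \<in> Ar D \<and> src D (\<eta> (X, Y)) = fo A (X, Y) \<and> tgt D (\<eta> (X, Y)) = fo B (X, Y)"
  and "\<And>f g. f \<in> Ar C \<Longrightarrow> g \<in> Ar C \<Longrightarrow>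
     cmp D (\<eta> (tgt C f, tgt C g)) (fa A (f, g)) = cmp D (fa B (f, g)) (\<eta> (src C f, src C g))"
  shows "nat_trans (prod_cat C C) D A B \<eta>"
  unfolding nat_trans_def hom_iff using assms by auto

lemma nat_trans_termI:
  assumes "\<eta> () \<in> Ar D \<and> src D (\<eta> ()) = fo A () \<and> tgt D (\<eta> ()) = fo B ()"
  and "cmp D (\<eta> ()) (fa A ()) = cmp D (fa B ()) (\<eta> ())"
  shows "nat_trans term_cat D A B \<eta>"
  unfolding nat_trans_def hom_iff using assms by auto

lemma cmd_1cell_prodI:
  assumes "comonad C T d e" "comonad D T' d' e'" "is_functor (prod_cat C C) D W"
   "nat_trans (prod_cat C C) D (fcomp W (prod_ftr T T)) (fcomp T' W) w"
   "\<And>X Y. X \<in> Ob C \<Longrightarrow> Y \<in> Ob C \<Longrightarrow> cmp D (d' (fo W (X, Y))) (w (X, Y)) =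
      cmp D (fa T' (w (X, Y))) (cmp D (w (fo T X, fo T Y)) (fa W (d X, d Y)))"
   "\<And>X Y. X \<in> Ob C \<Longrightarrow> Y \<in> Ob C \<Longrightarrow> cmp D (e' (fo W (X, Y))) (w (X, Y)) = fa W (e X, e Y)"
  shows "cmd_1cell (prod_cat C C) (prod_ftr T T) (prod_nt d d) (prod_nt e e) D T' d' e' W w"
  unfolding cmd_1cell_def using assms prod_comonad[OF assms(1)] by auto

lemma cmd_1cell_termI:
  assumes "comonad D T' d' e'" "is_functor term_cat D W"
   "nat_trans term_cat D (fcomp W id_ftr) (fcomp T' W) w"
   "cmp D (d' (fo W ())) (w ()) = cmp D (fa T' (w ())) (cmp D (w ()) (fa W ()))"
   "cmp D (e' (fo W ())) (w ()) = fa W ()"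
  shows "cmd_1cell term_cat id_ftr (\<lambda>_. ()) (\<lambda>_. ()) D T' d' e' W w"
  unfolding cmd_1cell_def using assms term_comonad by auto

locale th35 =
  fixes M :: "('o,'a) moncat"
    and F :: "('o,'a,'o,'a) ftr" and DF eF :: "'o \<Rightarrow> 'a" and F2 :: "'o \<Rightarrow> 'o \<Rightarrow> 'a" and F0 :: 'a
    and G :: "('o,'a,'o,'a) ftr" and dG eG :: "'o \<Rightarrow> 'a" and G2 :: "'o \<Rightarrow> 'o \<Rightarrow> 'a" and G0 :: 'a
    and \<phi> :: "'o \<Rightarrow> 'a"
  assumes MC: "monoidal_category M"
    and BF: "bicomonad M F DF eF F2 F0"
    and BG: "bicomonad M G dG eG G2 G0"
    and DL: "dist_law M F DF eF G dG eG \<phi>"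
begin

abbreviation (input) ccmp (infixr "\<cdot>" 55) where "g \<cdot> f \<equiv> cmp M g f"
abbreviation (input) ttns (infixr "\<otimes>" 60) where "f \<otimes> g \<equiv> tnsa M f g"
abbreviation (input) Ttns (infixr "\<odot>" 60) where "X \<odot> Y \<equiv> tns M X Y"
abbreviation (input) "I \<equiv> munit M"
abbreviation (input) "Ar' \<equiv> Ar M"
abbreviation (input) "Ob' \<equiv> Ob M"
abbreviation (input) "s \<equiv> src M"
abbreviation (input) "tg \<equiv> tgt M"
abbreviation (input) "id' \<equiv> idn M"
abbreviation (input) "F1 \<equiv> fo F"
abbreviation (input) "Fa \<equiv> fa F"
abbreviation (input) "G1 \<equiv> fo G"
abbreviation (input) "Ga \<equiv> fa G"

lemma M0: "is_category M" using MC unfolding monoidal_category_def by (elim conjE) assumption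
lemma M1: "munit M \<in> Ob M" using MC unfolding monoidal_category_def by (elim conjE) assumption
lemma M2: "(\<forall>X\<in>Ob M. \<forall>Y\<in>Ob M. tns M X Y \<in> Ob M)" using MC unfolding monoidal_category_def by (elim conjE) assumption
lemma M3: "(\<forall>f\<in>Ar M. \<forall>g\<in>Ar M. tnsa M f g \<in> hom M (tns M (src M f) (src M g)) (tns M (tgt M f) (tgt M g)))" using MC unfolding monoidal_category_def by (elim conjE) assumption
lemma M4: "(\<forall>X\<in>Ob M. \<forall>Y\<in>Ob M. tnsa M (idn M X) (idn M Y) = idn M (tns M X Y))" using MC unfolding monoidal_category_def by (elim conjE) assumption
lemma M5: "(\<forall>f\<in>Ar M. \<forall>g\<in>Ar M. \<forall>f'\<in>Ar M. \<forall>g'\<in>Ar M. tgt M f = src M g \<and> tgt M f' = src M g' \<longrightarrow>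
        tnsa M (cmp M g f) (cmp M g' f') = cmp M (tnsa M g g') (tnsa M f f'))" using MC unfolding monoidal_category_def by (elim conjE) assumption
lemma M6: "(\<forall>X\<in>Ob M. \<forall>Y\<in>Ob M. \<forall>Z\<in>Ob M.
        asc M X Y Z \<in> hom M (tns M (tns M X Y) Z) (tns M X (tns M Y Z)) \<and> is_iso M (asc M X Y Z))" using MC unfolding monoidal_category_def by (elim conjE) assumption
lemma M7: "(\<forall>X\<in>Ob M. lu M X \<in> hom M (tns M (munit M) X) X \<and> is_iso M (lu M X) \<and>
                ru M X \<in> hom M (tns M X (munit M)) X \<and> is_iso M (ru M X))" using MC unfolding monoidal_category_def by (elim conjE) assumption
lemma M9: "(\<forall>f\<in>Ar M. \<forall>g\<in>Ar M. \<forall>h\<in>Ar M.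
        cmp M (asc M (tgt M f) (tgt M g) (tgt M h)) (tnsa M (tnsa M f g) h) =
        cmp M (tnsa M f (tnsa M g h)) (asc M (src M f) (src M g) (src M h)))" using MC unfolding monoidal_category_def by (elim conjE) assumption
lemma M10: "(\<forall>f\<in>Ar M. cmp M (lu M (tgt M f)) (tnsa M (idn M (munit M)) f) = cmp M f (lu M (src M f)) \<and>
                cmp M (ru M (tgt M f)) (tnsa M f (idn M (munit M))) = cmp M f (ru M (src M f)))" using MC unfolding monoidal_category_def by (elim conjE) assumption
lemma M12: "(\<forall>W\<in>Ob M. \<forall>X\<in>Ob M. \<forall>Y\<in>Ob M. \<forall>Z\<in>Ob M.
        cmp M (tnsa M (idn M W) (asc M X Y Z))
          (cmp M (asc M W (tns M X Y) Z) (tnsa M (asc M W X Y) (idn M Z))) =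
        cmp M (asc M W X (tns M Y Z)) (asc M (tns M W X) Y Z))" using MC unfolding monoidal_category_def by (elim conjE) assumption
lemma M13: "(\<forall>X\<in>Ob M. \<forall>Y\<in>Ob M.
        cmp M (tnsa M (idn M X) (lu M Y)) (asc M X (munit M) Y) = tnsa M (ru M X) (idn M Y))" using MC unfolding monoidal_category_def by (elim conjE) assumption

lemma cat: "is_category M" by (rule M0)

lemma ar_src[simp]: "f \<in> Ar' \<Longrightarrow> s f \<in> Ob'" using cat unfolding is_category_def by blast
lemma ar_tgt[simp]: "f \<in> Ar' \<Longrightarrow> tg f \<in> Ob'" using cat unfolding is_category_def by blast
lemma idn_ty[simp]: "X \<in> Ob' \<Longrightarrow> id' X \<in> Ar'" "X \<in> Ob' \<Longrightarrow> s (id' X) = X" "X \<in> Ob' \<Longrightarrow> tg (id' X) = X"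
  using cat unfolding is_category_def hom_def by blast+
lemma cmp_ty[simp]: "f \<in> Ar' \<Longrightarrow> g \<in> Ar' \<Longrightarrow> tg f = s g \<Longrightarrow> g \<cdot> f \<in> Ar'"
  "f \<in> Ar' \<Longrightarrow> g \<in> Ar' \<Longrightarrow> tg f = s g \<Longrightarrow> s (g \<cdot> f) = s f"
  "f \<in> Ar' \<Longrightarrow> g \<in> Ar' \<Longrightarrow> tg f = s g \<Longrightarrow> tg (g \<cdot> f) = tg g"
  using cat unfolding is_category_def hom_def by blast+
lemma idl[simp]: "f \<in> Ar' \<Longrightarrow> tg f = Y \<Longrightarrow> id' Y \<cdot> f = f"
  using cat unfolding is_category_def by blast
lemma idr[simp]: "f \<in> Ar' \<Longrightarrow> s f = Y \<Longrightarrow> f \<cdot> id' Y = f"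
  using cat unfolding is_category_def by blast
lemma assoc[simp]: "f \<in> Ar' \<Longrightarrow> g \<in> Ar' \<Longrightarrow> h \<in> Ar' \<Longrightarrow> tg f = s g \<Longrightarrow> tg g = s h \<Longrightarrow>
   (h \<cdot> g) \<cdot> f = h \<cdot> (g \<cdot> f)"
  using cat unfolding is_category_def by metis

lemma unit_ob[simp]: "I \<in> Ob'" by (rule M1)
lemma tns_ob[simp]: "X \<in> Ob' \<Longrightarrow> Y \<in> Ob' \<Longrightarrow> X \<odot> Y \<in> Ob'" using M2 by blast
lemma tnsa_ty[simp]: "f \<in> Ar' \<Longrightarrow> g \<in> Ar' \<Longrightarrow> f \<otimes> g \<in> Ar'"
  "f \<in> Ar' \<Longrightarrow> g \<in> Ar' \<Longrightarrow> s (f \<otimes> g) = s f \<odot> s g"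
  "f \<in> Ar' \<Longrightarrow> g \<in> Ar' \<Longrightarrow> tg (f \<otimes> g) = tg f \<odot> tg g"
  using M3 unfolding hom_def by blast+
lemma tns_id[simp]: "X \<in> Ob' \<Longrightarrow> Y \<in> Ob' \<Longrightarrow> id' X \<otimes> id' Y = id' (X \<odot> Y)"
  using M4 by blast
lemma interchange: "f \<in> Ar' \<Longrightarrow> g \<in> Ar' \<Longrightarrow> f' \<in> Ar' \<Longrightarrow> g' \<in> Ar' \<Longrightarrow> tg f = s g \<Longrightarrow> tg f' = s g' \<Longrightarrow>
   (g \<cdot> f) \<otimes> (g' \<cdot> f') = (g \<otimes> g') \<cdot> (f \<otimes> f')"
  using M5 by blast

lemma asc_ty[simp]: "X \<in> Ob' \<Longrightarrow> Y \<in> Ob' \<Longrightarrow> Z \<in> Ob' \<Longrightarrow> asc M X Y Z \<in> Ar'"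
  "X \<in> Ob' \<Longrightarrow> Y \<in> Ob' \<Longrightarrow> Z \<in> Ob' \<Longrightarrow> s (asc M X Y Z) = (X \<odot> Y) \<odot> Z"
  "X \<in> Ob' \<Longrightarrow> Y \<in> Ob' \<Longrightarrow> Z \<in> Ob' \<Longrightarrow> tg (asc M X Y Z) = X \<odot> (Y \<odot> Z)"
  using M6 unfolding hom_def by blast+
lemma asc_iso: "X \<in> Ob' \<Longrightarrow> Y \<in> Ob' \<Longrightarrow> Z \<in> Ob' \<Longrightarrow> is_iso M (asc M X Y Z)"
  using M6 by blast
lemma lu_ty[simp]: "X \<in> Ob' \<Longrightarrow> lu M X \<in> Ar'" "X \<in> Ob' \<Longrightarrow> s (lu M X) = I \<odot> X" "X \<in> Ob' \<Longrightarrow> tg (lu M X) = X"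
  "X \<in> Ob' \<Longrightarrow> ru M X \<in> Ar'" "X \<in> Ob' \<Longrightarrow> s (ru M X) = X \<odot> I" "X \<in> Ob' \<Longrightarrow> tg (ru M X) = X"
  using M7 unfolding hom_def by blast+
lemma lu_iso: "X \<in> Ob' \<Longrightarrow> is_iso M (lu M X)" "X \<in> Ob' \<Longrightarrow> is_iso M (ru M X)"
  using M7 by blast+
lemma asc_nat: "f \<in> Ar' \<Longrightarrow> g \<in> Ar' \<Longrightarrow> h \<in> Ar' \<Longrightarrow>
  asc M (tg f) (tg g) (tg h) \<cdot> ((f \<otimes> g) \<otimes> h) = (f \<otimes> (g \<otimes> h)) \<cdot> asc M (s f) (s g) (s h)"
  using M9 by blast
lemma lu_nat: "f \<in> Ar' \<Longrightarrow> lu M (tg f) \<cdot> (id' I \<otimes> f) = f \<cdot> lu M (s f)"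
  "f \<in> Ar' \<Longrightarrow> ru M (tg f) \<cdot> (f \<otimes> id' I) = f \<cdot> ru M (s f)"
  using M10 by blast+

lemma iso_inv: "is_iso M f \<Longrightarrow> \<exists>g. g \<in> Ar' \<and> s g = tg f \<and> tg g = s f \<and> g \<cdot> f = id' (s f) \<and> f \<cdot> g = id' (tg f)"
  unfolding is_iso_def hom_def by blast

lemma fun_ty:
  assumes "is_functor M M T"
  shows "X \<in> Ob' \<Longrightarrow> fo T X \<in> Ob'" "f \<in> Ar' \<Longrightarrow> fa T f \<in> Ar'"
    "f \<in> Ar' \<Longrightarrow> s (fa T f) = fo T (s f)" "f \<in> Ar' \<Longrightarrow> tg (fa T f) = fo T (tg f)"
    "X \<in> Ob' \<Longrightarrow> fa T (id' X) = id' (fo T X)"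
    "f \<in> Ar' \<Longrightarrow> g \<in> Ar' \<Longrightarrow> tg f = s g \<Longrightarrow> fa T (g \<cdot> f) = fa T g \<cdot> fa T f"
  using assms unfolding is_functor_def hom_def by blast+

lemma nt_ty:
  assumes "nat_trans M M A B \<eta>"
  shows "X \<in> Ob' \<Longrightarrow> \<eta> X \<in> Ar'" "X \<in> Ob' \<Longrightarrow> s (\<eta> X) = fo A X" "X \<in> Ob' \<Longrightarrow> tg (\<eta> X) = fo B X"
    "f \<in> Ar' \<Longrightarrow> \<eta> (tg f) \<cdot> fa A f = fa B f \<cdot> \<eta> (s f)"
  using assms unfolding nat_trans_def hom_def by blast+

lemma comonad_D:
  assumes "comonad M T d e"
  shows "is_functor M M T" "nat_trans M M T (fcomp T T) d" "nat_trans M M T id_ftr e"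
   "X \<in> Ob' \<Longrightarrow> d (fo T X) \<cdot> d X = fa T (d X) \<cdot> d X"
   "X \<in> Ob' \<Longrightarrow> e (fo T X) \<cdot> d X = id' (fo T X)"
   "X \<in> Ob' \<Longrightarrow> fa T (e X) \<cdot> d X = id' (fo T X)"
  using assms unfolding comonad_def by blast+

lemma monfun_D:
  assumes "monoidal_functor M T T2 T0"
  shows "is_functor M M T"
   "X \<in> Ob' \<Longrightarrow> Y \<in> Ob' \<Longrightarrow> T2 X Y \<in> Ar'"
   "X \<in> Ob' \<Longrightarrow> Y \<in> Ob' \<Longrightarrow> s (T2 X Y) = fo T X \<odot> fo T Y"
   "X \<in> Ob' \<Longrightarrow> Y \<in> Ob' \<Longrightarrow> tg (T2 X Y) = fo T (X \<odot> Y)"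
   "f \<in> Ar' \<Longrightarrow> g \<in> Ar' \<Longrightarrow> T2 (tg f) (tg g) \<cdot> (fa T f \<otimes> fa T g) = fa T (f \<otimes> g) \<cdot> T2 (s f) (s g)"
   "T0 \<in> Ar'" "s T0 = I" "tg T0 = fo T I"
   "X \<in> Ob' \<Longrightarrow> Y \<in> Ob' \<Longrightarrow> Z \<in> Ob' \<Longrightarrow>
        fa T (asc M X Y Z) \<cdot> (T2 (X \<odot> Y) Z \<cdot> (T2 X Y \<otimes> id' (fo T Z))) =
        T2 X (Y \<odot> Z) \<cdot> ((id' (fo T X) \<otimes> T2 Y Z) \<cdot> asc M (fo T X) (fo T Y) (fo T Z))"
   "X \<in> Ob' \<Longrightarrow> fa T (lu M X) \<cdot> (T2 I X \<cdot> (T0 \<otimes> id' (fo T X))) = lu M (fo T X)"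
   "X \<in> Ob' \<Longrightarrow> fa T (ru M X) \<cdot> (T2 X I \<cdot> (id' (fo T X) \<otimes> T0)) = ru M (fo T X)"
  using assms unfolding monoidal_functor_def hom_def by blast+

lemma bicomonad_D:
  assumes "bicomonad M T d e T2 T0"
  shows "comonad M T d e" "monoidal_functor M T T2 T0"
   "X \<in> Ob' \<Longrightarrow> Y \<in> Ob' \<Longrightarrow> fa T (T2 X Y) \<cdot> (T2 (fo T X) (fo T Y) \<cdot> (d X \<otimes> d Y)) = d (X \<odot> Y) \<cdot> T2 X Y"
   "X \<in> Ob' \<Longrightarrow> Y \<in> Ob' \<Longrightarrow> e (X \<odot> Y) \<cdot> T2 X Y = e X \<otimes> e Y"
   "fa T T0 \<cdot> T0 = d I \<cdot> T0"
   "e I \<cdot> T0 = id' I"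
  using assms unfolding bicomonad_def by blast+

lemma dist_D:
  assumes "dist_law M A DA eA B dB eB \<psi>"
  shows "nat_trans M M (fcomp A B) (fcomp B A) \<psi>"
   "X \<in> Ob' \<Longrightarrow> fa B (\<psi> X) \<cdot> (\<psi> (fo B X) \<cdot> fa A (dB X)) = dB (fo A X) \<cdot> \<psi> X"
   "X \<in> Ob' \<Longrightarrow> \<psi> (fo A X) \<cdot> (fa A (\<psi> X) \<cdot> DA (fo B X)) = fa B (DA X) \<cdot> \<psi> X"
   "X \<in> Ob' \<Longrightarrow> fa B (eA X) \<cdot> \<psi> X = eA (fo B X)"
   "X \<in> Ob' \<Longrightarrow> eB (fo A X) \<cdot> \<psi> X = fa A (eB X)"
  using assms unfolding dist_law_def by blast+


lemma ext2: "g \<cdot> f = r \<Longrightarrow> f \<in> Ar' \<Longrightarrow> g \<in> Ar' \<Longrightarrow> tg f = s g \<Longrightarrow> y \<in> Ar' \<Longrightarrow> tg y = s f \<Longrightarrow>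
   g \<cdot> (f \<cdot> y) = r \<cdot> y"
  by (metis assoc)
lemma ext3: "h \<cdot> (g \<cdot> f) = r \<Longrightarrow> f \<in> Ar' \<Longrightarrow> g \<in> Ar' \<Longrightarrow> h \<in> Ar' \<Longrightarrow> tg f = s g \<Longrightarrow> tg g = s h \<Longrightarrow>
   y \<in> Ar' \<Longrightarrow> tg y = s f \<Longrightarrow> h \<cdot> (g \<cdot> (f \<cdot> y)) = r \<cdot> y"
  by (metis assoc cmp_ty)

lemma tens2: "f \<in> Ar' \<Longrightarrow> g \<in> Ar' \<Longrightarrow> f' \<in> Ar' \<Longrightarrow> g' \<in> Ar' \<Longrightarrow> tg f = s g \<Longrightarrow> tg f' = s g' \<Longrightarrow>
   (g \<otimes> g') \<cdot> (f \<otimes> f') = (g \<cdot> f) \<otimes> (g' \<cdot> f')"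
  by (simp add: interchange)
lemma tens3: "f \<in> Ar' \<Longrightarrow> g \<in> Ar' \<Longrightarrow> h \<in> Ar' \<Longrightarrow> f' \<in> Ar' \<Longrightarrow> g' \<in> Ar' \<Longrightarrow> h' \<in> Ar' \<Longrightarrow>
   tg f = s g \<Longrightarrow> tg f' = s g' \<Longrightarrow> tg g = s h \<Longrightarrow> tg g' = s h' \<Longrightarrow>
   (h \<otimes> h') \<cdot> ((g \<otimes> g') \<cdot> (f \<otimes> f')) = (h \<cdot> (g \<cdot> f)) \<otimes> (h' \<cdot> (g' \<cdot> f'))"
  by (simp add: interchange)

lemmas CF = bicomonad_D(1)[OF BF]
lemmas MF = bicomonad_D(2)[OF BF]
lemmas FF = comonad_D(1)[OF CF]
lemmas CG = bicomonad_D(1)[OF BG]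
lemmas MG = bicomonad_D(2)[OF BG]
lemmas FG = comonad_D(1)[OF CG]

lemmas F_ty[simp] = fun_ty(1-5)[OF FF]
lemmas G_ty[simp] = fun_ty(1-5)[OF FG]
lemmas F_cmp[simp] = fun_ty(6)[OF FF]
lemmas G_cmp[simp] = fun_ty(6)[OF FG]
lemmas DF_ty[simp] = nt_ty(1-3)[OF comonad_D(2)[OF CF], simplified]
lemmas eF_ty[simp] = nt_ty(1-3)[OF comonad_D(3)[OF CF], simplified]
lemmas dG_ty[simp] = nt_ty(1-3)[OF comonad_D(2)[OF CG], simplified]
lemmas eG_ty[simp] = nt_ty(1-3)[OF comonad_D(3)[OF CG], simplified]
lemmas DF_nat = nt_ty(4)[OF comonad_D(2)[OF CF], simplified]
lemmas eF_nat = nt_ty(4)[OF comonad_D(3)[OF CF], simplified]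
lemmas dG_nat = nt_ty(4)[OF comonad_D(2)[OF CG], simplified]
lemmas eG_nat = nt_ty(4)[OF comonad_D(3)[OF CG], simplified]
lemmas F2_ty[simp] = monfun_D(2-4)[OF MF] monfun_D(6-8)[OF MF]
lemmas G2_ty[simp] = monfun_D(2-4)[OF MG] monfun_D(6-8)[OF MG]
lemmas F2_nat = monfun_D(5)[OF MF]
lemmas G2_nat = monfun_D(5)[OF MG]
lemmas F_asc = monfun_D(9)[OF MF]
lemmas G_asc = monfun_D(9)[OF MG]
lemmas F_lu = monfun_D(10,11)[OF MF]
lemmas G_lu = monfun_D(10,11)[OF MG]
lemmas phi_ty[simp] = nt_ty(1-3)[OF dist_D(1)[OF DL], simplified]
lemmas phi_nat = nt_ty(4)[OF dist_D(1)[OF DL], simplified]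
lemmas phi_d = dist_D(2)[OF DL]
lemmas phi_D = dist_D(3)[OF DL]
lemmas phi_eF = dist_D(4)[OF DL]
lemmas phi_eG = dist_D(5)[OF DL]
lemmas F_coass = comonad_D(4)[OF CF]
lemmas F_cu1 = comonad_D(5)[OF CF]
lemmas F_cu2 = comonad_D(6)[OF CF]
lemmas G_coass = comonad_D(4)[OF CG]
lemmas G_cu1 = comonad_D(5)[OF CG]
lemmas G_cu2 = comonad_D(6)[OF CG]
lemmas F2_D = bicomonad_D(3)[OF BF]
lemmas F2_e = bicomonad_D(4)[OF BF]
lemmas F0_D = bicomonad_D(5)[OF BF]
lemmas F0_e = bicomonad_D(6)[OF BF]
lemmas G2_D = bicomonad_D(3)[OF BG]
lemmas G2_e = bicomonad_D(4)[OF BG]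
lemmas G0_D = bicomonad_D(5)[OF BG]
lemmas G0_e = bicomonad_D(6)[OF BG]


lemma flift: "is_functor M M T \<Longrightarrow> g \<cdot> f = r \<Longrightarrow> f \<in> Ar' \<Longrightarrow> g \<in> Ar' \<Longrightarrow> tg f = s g \<Longrightarrow>
  fa T g \<cdot> fa T f = fa T r"
  using fun_ty(6) by metis
lemmas Flift = flift[OF FF]
lemmas Glift = flift[OF FG]

abbreviation (input) "P2T \<equiv> (\<forall>X\<in>Ob'. \<forall>Y\<in>Ob'. \<phi> (X \<odot> Y) \<cdot> (Fa (G2 X Y) \<cdot> F2 (G1 X) (G1 Y)) =
        Ga (F2 X Y) \<cdot> (G2 (F1 X) (F1 Y) \<cdot> (\<phi> X \<otimes> \<phi> Y)))"
abbreviation (input) "P2U \<equiv> \<phi> I \<cdot> (Fa G0 \<cdot> F0) = Ga F0 \<cdot> G0"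
lemma P2_iff: "monoidal_dist_law M F F2 F0 G G2 G0 \<phi> \<longleftrightarrow> P2T \<and> P2U"
  unfolding monoidal_dist_law_def by blast

lemma DF_natL: "f \<in> Ar' \<Longrightarrow> tg f = Y \<Longrightarrow> DF Y \<cdot> Fa f = Fa (Fa f) \<cdot> DF (s f)" using DF_nat by blast
lemma DF_natR: "f \<in> Ar' \<Longrightarrow> s f = X \<Longrightarrow> Fa (Fa f) \<cdot> DF X = DF (tg f) \<cdot> Fa f" using DF_nat by metis
lemma eF_natL: "f \<in> Ar' \<Longrightarrow> tg f = Y \<Longrightarrow> eF Y \<cdot> Fa f = f \<cdot> eF (s f)" using eF_nat by blast
lemma eF_natR: "f \<in> Ar' \<Longrightarrow> s f = X \<Longrightarrow> f \<cdot> eF X = eF (tg f) \<cdot> Fa f" using eF_nat by metis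
lemma dG_natL: "f \<in> Ar' \<Longrightarrow> tg f = Y \<Longrightarrow> dG Y \<cdot> Ga f = Ga (Ga f) \<cdot> dG (s f)" using dG_nat by blast
lemma dG_natR: "f \<in> Ar' \<Longrightarrow> s f = X \<Longrightarrow> Ga (Ga f) \<cdot> dG X = dG (tg f) \<cdot> Ga f" using dG_nat by metis
lemma eG_natL: "f \<in> Ar' \<Longrightarrow> tg f = Y \<Longrightarrow> eG Y \<cdot> Ga f = f \<cdot> eG (s f)" using eG_nat by blast
lemma eG_natR: "f \<in> Ar' \<Longrightarrow> s f = X \<Longrightarrow> f \<cdot> eG X = eG (tg f) \<cdot> Ga f" using eG_nat by metis
lemma phi_natL: "f \<in> Ar' \<Longrightarrow> tg f = Y \<Longrightarrow> \<phi> Y \<cdot> Fa (Ga f) = Ga (Fa f) \<cdot> \<phi> (s f)" using phi_nat by blast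
lemma phi_natR: "f \<in> Ar' \<Longrightarrow> s f = X \<Longrightarrow> Ga (Fa f) \<cdot> \<phi> X = \<phi> (tg f) \<cdot> Fa (Ga f)" using phi_nat by metis
lemma F2_natL: "f \<in> Ar' \<Longrightarrow> g \<in> Ar' \<Longrightarrow> tg f = X \<Longrightarrow> tg g = Y \<Longrightarrow> F2 X Y \<cdot> (Fa f \<otimes> Fa g) = Fa (f \<otimes> g) \<cdot> F2 (s f) (s g)"
  using F2_nat by blast
lemma F2_natR: "f \<in> Ar' \<Longrightarrow> g \<in> Ar' \<Longrightarrow> s f = X \<Longrightarrow> s g = Y \<Longrightarrow> Fa (f \<otimes> g) \<cdot> F2 X Y = F2 (tg f) (tg g) \<cdot> (Fa f \<otimes> Fa g)"
  using F2_nat by metis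
lemma G2_natL: "f \<in> Ar' \<Longrightarrow> g \<in> Ar' \<Longrightarrow> tg f = X \<Longrightarrow> tg g = Y \<Longrightarrow> G2 X Y \<cdot> (Ga f \<otimes> Ga g) = Ga (f \<otimes> g) \<cdot> G2 (s f) (s g)"
  using G2_nat by blast
lemma G2_natR: "f \<in> Ar' \<Longrightarrow> g \<in> Ar' \<Longrightarrow> s f = X \<Longrightarrow> s g = Y \<Longrightarrow> Ga (f \<otimes> g) \<cdot> G2 X Y = G2 (tg f) (tg g) \<cdot> (Ga f \<otimes> Ga g)"
  using G2_nat by metis
lemmas natL = DF_natL eF_natL dG_natL eG_natL phi_natL
lemmas natL' = ext2[OF DF_natL] ext2[OF eF_natL] ext2[OF dG_natL] ext2[OF eG_natL] ext2[OF phi_natL]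
lemmas natR = DF_natR eF_natR dG_natR eG_natR phi_natR
lemmas natR' = ext2[OF DF_natR] ext2[OF eF_natR] ext2[OF dG_natR] ext2[OF eG_natR] ext2[OF phi_natR]

lemma Gcu2F: "Z \<in> Ob' \<Longrightarrow> Fa (Ga (eG Z)) \<cdot> Fa (dG Z) = id' (F1 (G1 Z))"
  by (simp flip: F_cmp add: G_cu2)
lemma Gcu1F: "Z \<in> Ob' \<Longrightarrow> Fa (eG (G1 Z)) \<cdot> Fa (dG Z) = id' (F1 (G1 Z))"
  by (simp flip: F_cmp add: G_cu1)

end

context th35 begin

lemma tens_functor: "is_functor (prod_cat M M) M (fcomp (tens_ftr M) (prod_ftr F F))"
  unfolding is_functor_def hom_iff by (auto simp: interchange)

lemma tens_functor2: "is_functor (prod_cat M M) M (fcomp F (tens_ftr M))"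
  unfolding is_functor_def hom_iff by (auto simp: interchange)

lemma tens_functor0: "is_functor (prod_cat M M) M (tens_ftr M)"
  unfolding is_functor_def hom_iff by (auto simp: interchange)

lemma unit_functor: "is_functor term_cat M (unit_ftr M)"
  unfolding is_functor_def hom_iff by auto

lemma unit_functor2: "is_functor term_cat M (fcomp F (unit_ftr M))"
  unfolding is_functor_def hom_iff by auto

lemma w_nat: assumes "f \<in> Ar'" "g \<in> Ar'"
  shows "(G2 (F1 (tg f)) (F1 (tg g)) \<cdot> (\<phi> (tg f) \<otimes> \<phi> (tg g))) \<cdot> (Fa (Ga f) \<otimes> Fa (Ga g)) =
         Ga (Fa f \<otimes> Fa g) \<cdot> (G2 (F1 (s f)) (F1 (s g)) \<cdot> (\<phi> (s f) \<otimes> \<phi> (s g)))"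
proof -
  have h: "Ga (Fa f \<otimes> Fa g) \<cdot> G2 (F1 (s f)) (F1 (s g)) = G2 (F1 (tg f)) (F1 (tg g)) \<cdot> (Ga (Fa f) \<otimes> Ga (Fa g))"
    using G2_nat[of "Fa f" "Fa g"] assms by simp
  show ?thesis using assms by (simp add: tens2 phi_nat h ext2[OF h])
qed


lemma w_d: assumes "X \<in> Ob'" "Y \<in> Ob'"
  shows "dG (F1 X \<odot> F1 Y) \<cdot> (G2 (F1 X) (F1 Y) \<cdot> (\<phi> X \<otimes> \<phi> Y)) =
    Ga (G2 (F1 X) (F1 Y) \<cdot> (\<phi> X \<otimes> \<phi> Y)) \<cdot> ((G2 (F1 (G1 X)) (F1 (G1 Y)) \<cdot> (\<phi> (G1 X) \<otimes> \<phi> (G1 Y))) \<cdot> (Fa (dG X) \<otimes> Fa (dG Y)))"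
proof -
  have h1: "dG (F1 X \<odot> F1 Y) \<cdot> G2 (F1 X) (F1 Y) = Ga (G2 (F1 X) (F1 Y)) \<cdot> (G2 (G1 (F1 X)) (G1 (F1 Y)) \<cdot> (dG (F1 X) \<otimes> dG (F1 Y)))"
    using G2_D[of "F1 X" "F1 Y"] assms by simp
  have h2: "Ga (\<phi> X \<otimes> \<phi> Y) \<cdot> G2 (F1 (G1 X)) (F1 (G1 Y)) = G2 (G1 (F1 X)) (G1 (F1 Y)) \<cdot> (Ga (\<phi> X) \<otimes> Ga (\<phi> Y))"
    using G2_nat[of "\<phi> X" "\<phi> Y"] assms by simp
  show ?thesis using assms by (simp add: tens2 h1 ext2[OF h1] h2 ext2[OF h2] phi_d[symmetric])
qed

lemma w_e: assumes "X \<in> Ob'" "Y \<in> Ob'"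
  shows "eG (F1 X \<odot> F1 Y) \<cdot> (G2 (F1 X) (F1 Y) \<cdot> (\<phi> X \<otimes> \<phi> Y)) = Fa (eG X) \<otimes> Fa (eG Y)"
  using assms by (simp add: tens2 ext2[OF G2_e] phi_eG)

lemma w'_nat: assumes "f \<in> Ar'" "g \<in> Ar'"
  shows "(\<phi> (tg f \<odot> tg g) \<cdot> Fa (G2 (tg f) (tg g))) \<cdot> Fa (Ga f \<otimes> Ga g) =
         Ga (Fa (f \<otimes> g)) \<cdot> (\<phi> (s f \<odot> s g) \<cdot> Fa (G2 (s f) (s g)))"
proof -
  have h: "\<phi> (tg f \<odot> tg g) \<cdot> Fa (Ga (f \<otimes> g)) = Ga (Fa (f \<otimes> g)) \<cdot> \<phi> (s f \<odot> s g)"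
    using phi_nat[of "f \<otimes> g"] assms by simp
  have h2: "Fa (G2 (tg f) (tg g)) \<cdot> Fa (Ga f \<otimes> Ga g) = Fa (Ga (f \<otimes> g)) \<cdot> Fa (G2 (s f) (s g))"
    using Flift[OF G2_nat[of f g]] assms by simp
  show ?thesis using assms by (simp add: h2 ext2[OF h2] h ext2[OF h])
qed

lemma w'_d: assumes "X \<in> Ob'" "Y \<in> Ob'"
  shows "dG (F1 (X \<odot> Y)) \<cdot> (\<phi> (X \<odot> Y) \<cdot> Fa (G2 X Y)) =
    Ga (\<phi> (X \<odot> Y) \<cdot> Fa (G2 X Y)) \<cdot> ((\<phi> (G1 X \<odot> G1 Y) \<cdot> Fa (G2 (G1 X) (G1 Y))) \<cdot> Fa (dG X \<otimes> dG Y))"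
proof -
  have h1: "Fa (dG (X \<odot> Y)) \<cdot> Fa (G2 X Y) = Fa (Ga (G2 X Y)) \<cdot> (Fa (G2 (G1 X) (G1 Y)) \<cdot> Fa (dG X \<otimes> dG Y))"
    using Flift[OF G2_D[of X Y, symmetric]] assms by simp
  have h2: "Ga (Fa (G2 X Y)) \<cdot> \<phi> (G1 X \<odot> G1 Y) = \<phi> (G1 (X \<odot> Y)) \<cdot> Fa (Ga (G2 X Y))"
    using phi_nat[of "G2 X Y"] assms by simp
  have h3: "dG (F1 (X \<odot> Y)) \<cdot> \<phi> (X \<odot> Y) = Ga (\<phi> (X \<odot> Y)) \<cdot> (\<phi> (G1 (X \<odot> Y)) \<cdot> Fa (dG (X \<odot> Y)))"
    using phi_d[of "X \<odot> Y"] assms by simp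
  show ?thesis using assms by (simp add: h1 ext2[OF h1] h2 ext2[OF h2] h3 ext2[OF h3])
qed

lemma w'_e: assumes "X \<in> Ob'" "Y \<in> Ob'"
  shows "eG (F1 (X \<odot> Y)) \<cdot> (\<phi> (X \<odot> Y) \<cdot> Fa (G2 X Y)) = Fa (eG X \<otimes> eG Y)"
proof -
  have h1: "Fa (eG (X \<odot> Y)) \<cdot> Fa (G2 X Y) = Fa (eG X \<otimes> eG Y)"
    using Flift[OF G2_e[of X Y]] assms by simp
  show ?thesis using assms by (simp add: ext2[OF phi_eG] h1)
qed

lemma u2_d: "dG (F1 I) \<cdot> (\<phi> I \<cdot> Fa G0) = Ga (\<phi> I \<cdot> Fa G0) \<cdot> (\<phi> I \<cdot> Fa G0)"
proof -
  have h1: "Fa (dG I) \<cdot> Fa G0 = Fa (Ga G0) \<cdot> Fa G0"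
    using Flift[OF G0_D[symmetric]] by simp
  have h2: "Ga (Fa G0) \<cdot> \<phi> I = \<phi> (G1 I) \<cdot> Fa (Ga G0)"
    using phi_nat[of "G0"] by simp
  show ?thesis by (simp add: h1 ext2[OF h1] h2 ext2[OF h2] ext2[OF phi_d[symmetric]])
qed

lemma u2_e: "eG (F1 I) \<cdot> (\<phi> I \<cdot> Fa G0) = id' (F1 I)"
proof -
  have h1: "Fa (eG I) \<cdot> Fa G0 = id' (F1 I)"
    using Flift[OF G0_e] by simp
  show ?thesis by (simp add: ext2[OF phi_eG] h1)
qed

lemma W1: "cmd_1cell (prod_cat M M) (prod_ftr G G) (prod_nt dG dG) (prod_nt eG eG) M G dG eG
             (fcomp (tens_ftr M) (prod_ftr F F))
             (\<lambda>(X, Y). cmp M (G2 (fo F X) (fo F Y)) (tnsa M (\<phi> X) (\<phi> Y)))"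
proof (rule cmd_1cell_prodI[OF CG CG tens_functor])
  show "nat_trans (prod_cat M M) M (fcomp (fcomp (tens_ftr M) (prod_ftr F F)) (prod_ftr G G))
     (fcomp G (fcomp (tens_ftr M) (prod_ftr F F))) (\<lambda>(X, Y). G2 (F1 X) (F1 Y) \<cdot> (\<phi> X \<otimes> \<phi> Y))"
    by (rule nat_trans_prodI) (use w_nat in auto)
qed (use w_d w_e in auto)

lemma W2: "cmd_1cell (prod_cat M M) (prod_ftr G G) (prod_nt dG dG) (prod_nt eG eG) M G dG eG
             (fcomp F (tens_ftr M))
             (\<lambda>(X, Y). cmp M (\<phi> (tns M X Y)) (fa F (G2 X Y)))"
proof (rule cmd_1cell_prodI[OF CG CG tens_functor2])
  show "nat_trans (prod_cat M M) M (fcomp (fcomp F (tens_ftr M)) (prod_ftr G G))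
     (fcomp G (fcomp F (tens_ftr M))) (\<lambda>(X, Y). cmp M (\<phi> (tns M X Y)) (fa F (G2 X Y)))"
    by (rule nat_trans_prodI) (use w'_nat in auto)
qed (use w'_d w'_e in auto)

lemma NF2: "nat_trans (prod_cat M M) M (fcomp (tens_ftr M) (prod_ftr F F)) (fcomp F (tens_ftr M)) (\<lambda>(X, Y). F2 X Y)"
  by (rule nat_trans_prodI) (use F2_nat in auto)

lemma U1: "cmd_1cell term_cat id_ftr (\<lambda>_. ()) (\<lambda>_. ()) M G dG eG (unit_ftr M) (\<lambda>_. G0)"
  by (rule cmd_1cell_termI[OF CG unit_functor], rule nat_trans_termI) (auto simp: G0_D G0_e)

lemma U2: "cmd_1cell term_cat id_ftr (\<lambda>_. ()) (\<lambda>_. ()) M G dG eG (fcomp F (unit_ftr M)) (\<lambda>_. cmp M (\<phi> (munit M)) (fa F G0))"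
  by (rule cmd_1cell_termI[OF CG unit_functor2], rule nat_trans_termI) (auto simp: u2_d u2_e)

lemma NF0: "nat_trans term_cat M (unit_ftr M) (fcomp F (unit_ftr M)) (\<lambda>_. F0)"
  by (rule nat_trans_termI) auto

lemma P4_iff: "(cmd_2cell (prod_cat M M) (prod_ftr G G) (prod_nt dG dG) (prod_nt eG eG) M G dG eG
             (fcomp (tens_ftr M) (prod_ftr F F))
             (\<lambda>(X, Y). cmp M (G2 (fo F X) (fo F Y)) (tnsa M (\<phi> X) (\<phi> Y)))
             (fcomp F (tens_ftr M))
             (\<lambda>(X, Y). cmp M (\<phi> (tns M X Y)) (fa F (G2 X Y)))
             (\<lambda>(X, Y). F2 X Y)
         \<and> cmd_2cell term_cat id_ftr (\<lambda>_. ()) (\<lambda>_. ()) M G dG eG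
             (unit_ftr M) (\<lambda>_. G0)
             (fcomp F (unit_ftr M)) (\<lambda>_. cmp M (\<phi> (munit M)) (fa F G0))
             (\<lambda>_. F0)) \<longleftrightarrow> P2T \<and> P2U"
proof -
  have a: "(\<forall>p\<in>Ob (prod_cat M M). cmp M ((\<lambda>(X, Y). cmp M (\<phi> (tns M X Y)) (fa F (G2 X Y))) p)
             ((\<lambda>(X, Y). F2 X Y) (fo (prod_ftr G G) p)) =
          cmp M (fa G ((\<lambda>(X, Y). F2 X Y) p)) ((\<lambda>(X, Y). cmp M (G2 (fo F X) (fo F Y)) (tnsa M (\<phi> X) (\<phi> Y))) p))
        \<longleftrightarrow> P2T"
    by auto
  have b: "(\<forall>u\<in>Ob term_cat. cmp M ((\<lambda>_. cmp M (\<phi> (munit M)) (fa F G0)) u) ((\<lambda>_. F0) (fo id_ftr u)) =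
       cmp M (fa G ((\<lambda>_. F0) u)) ((\<lambda>_. G0) u)) \<longleftrightarrow> P2U"
    by simp
  show ?thesis unfolding cmd_2cell_def using W1 W2 NF2 U1 U2 NF0 a b by blast
qed

end

context th35 begin

lemma gen_tens_1cell: assumes B: "bicomonad M T d e T2 T0"
  shows "cmd_1cell (prod_cat M M) (prod_ftr T T) (prod_nt d d) (prod_nt e e) M T d e (tens_ftr M) (\<lambda>(X, Y). T2 X Y)"
proof -
  note C = bicomonad_D(1)[OF B] and MT = bicomonad_D(2)[OF B]
  note FT = comonad_D(1)[OF C]
  note [simp] = fun_ty(1-5)[OF FT] fun_ty(6)[OF FT] nt_ty(1-3)[OF comonad_D(2)[OF C], simplified]
     nt_ty(1-3)[OF comonad_D(3)[OF C], simplified] monfun_D(2-4)[OF MT] monfun_D(6-8)[OF MT]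
  show ?thesis
  proof (rule cmd_1cell_prodI[OF C C tens_functor0])
    show "nat_trans (prod_cat M M) M (fcomp (tens_ftr M) (prod_ftr T T)) (fcomp T (tens_ftr M)) (\<lambda>(X, Y). T2 X Y)"
      by (rule nat_trans_prodI) (use monfun_D(5)[OF MT] in auto)
  qed (use bicomonad_D(3,4)[OF B] in auto)
qed

lemma gen_unit_1cell: assumes B: "bicomonad M T d e T2 T0"
  shows "cmd_1cell term_cat id_ftr (\<lambda>_. ()) (\<lambda>_. ()) M T d e (unit_ftr M) (\<lambda>_. T0)"
proof -
  note C = bicomonad_D(1)[OF B] and MT = bicomonad_D(2)[OF B]
  note FT = comonad_D(1)[OF C]
  note [simp] = fun_ty(1-5)[OF FT] fun_ty(6)[OF FT] nt_ty(1-3)[OF comonad_D(2)[OF C], simplified]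
     nt_ty(1-3)[OF comonad_D(3)[OF C], simplified] monfun_D(2-4)[OF MT] monfun_D(6-8)[OF MT]
  show ?thesis
    by (rule cmd_1cell_termI[OF C unit_functor], rule nat_trans_termI) (use bicomonad_D(5,6)[OF B] in auto)
qed

lemma P5_iff: "(cc_1cell (prod_cat M M) (prod_ftr F F) (prod_nt DF DF) (prod_nt eF eF)
             (prod_ftr G G) (prod_nt dG dG) (prod_nt eG eG) (prod_nt \<phi> \<phi>)
             M F DF eF G dG eG \<phi>
             (tens_ftr M) (\<lambda>(X, Y). F2 X Y) (\<lambda>(X, Y). G2 X Y)
         \<and> cc_1cell term_cat id_ftr (\<lambda>_. ()) (\<lambda>_. ()) id_ftr (\<lambda>_. ()) (\<lambda>_. ()) (\<lambda>_. ())
             M F DF eF G dG eG \<phi>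
             (unit_ftr M) (\<lambda>_. F0) (\<lambda>_. G0)) \<longleftrightarrow> P2T \<and> P2U"
proof -
  have c0: "cc_0cell (prod_cat M M) (prod_ftr F F) (prod_nt DF DF) (prod_nt eF eF)
             (prod_ftr G G) (prod_nt dG dG) (prod_nt eG eG) (prod_nt \<phi> \<phi>)"
    unfolding cc_0cell_def using prod_comonad[OF CF] prod_comonad[OF CG] prod_dist[OF DL] by blast
  have c1: "cc_0cell M F DF eF G dG eG \<phi>" unfolding cc_0cell_def using CF CG DL by blast
  have c2: "cc_0cell term_cat id_ftr (\<lambda>_. ()) (\<lambda>_. ()) id_ftr (\<lambda>_. ()) (\<lambda>_. ()) (\<lambda>_. ())"
    unfolding cc_0cell_def using term_comonad term_dist by blast
  have a: "(\<forall>p\<in>Ob (prod_cat M M).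
        cmp M (fa G ((\<lambda>(X, Y). F2 X Y) p)) (cmp M ((\<lambda>(X, Y). G2 X Y) (fo (prod_ftr F F) p)) (fa (tens_ftr M) (prod_nt \<phi> \<phi> p))) =
        cmp M (\<phi> (fo (tens_ftr M) p)) (cmp M (fa F ((\<lambda>(X, Y). G2 X Y) p)) ((\<lambda>(X, Y). F2 X Y) (fo (prod_ftr G G) p))))
        \<longleftrightarrow> P2T"
    by auto
  have b: "(\<forall>u\<in>Ob term_cat. cmp M (fa G ((\<lambda>_. F0) u)) (cmp M ((\<lambda>_. G0) (fo id_ftr u)) (fa (unit_ftr M) ((\<lambda>_. ()) u))) =
          cmp M (\<phi> (fo (unit_ftr M) u)) (cmp M (fa F ((\<lambda>_. G0) u)) ((\<lambda>_. F0) (fo id_ftr u)))) \<longleftrightarrow> P2U"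
    by auto
  show ?thesis unfolding cc_1cell_def
    using c0 c1 c2 gen_tens_1cell[OF BF] gen_tens_1cell[OF BG] gen_unit_1cell[OF BF] gen_unit_1cell[OF BG] a b
    by blast
qed

end

context th35 begin

lemma fcomp_functor: "is_functor M M T \<Longrightarrow> is_functor M M S \<Longrightarrow> is_functor M M (fcomp T S)"
  unfolding is_functor_def hom_iff by auto

lemma tens_split_l: "a \<in> Ar' \<Longrightarrow> b \<in> Ar' \<Longrightarrow> tg b = s a \<Longrightarrow> Z \<in> Ob' \<Longrightarrow>
  (a \<cdot> b) \<otimes> id' Z = (a \<otimes> id' Z) \<cdot> (b \<otimes> id' Z)"
  using interchange[of b a "id' Z" "id' Z"] by simp
lemma tens_split_r: "a \<in> Ar' \<Longrightarrow> b \<in> Ar' \<Longrightarrow> tg b = s a \<Longrightarrow> Z \<in> Ob' \<Longrightarrow>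
  id' Z \<otimes> (a \<cdot> b) = (id' Z \<otimes> a) \<cdot> (id' Z \<otimes> b)"
  using interchange[of "id' Z" "id' Z" b a] by simp

lemma mf_natl_id: assumes MT: "monoidal_functor M T T2 T0"
  shows "f \<in> Ar' \<Longrightarrow> B \<in> Ob' \<Longrightarrow> tg f = A \<Longrightarrow> T2 A B \<cdot> (fa T f \<otimes> id' (fo T B)) = fa T (f \<otimes> id' B) \<cdot> T2 (s f) B"
  using monfun_D(5)[OF MT, of f "id' B"] fun_ty[OF monfun_D(1)[OF MT]] by simp
lemma mf_natr_id: assumes MT: "monoidal_functor M T T2 T0"
  shows "g \<in> Ar' \<Longrightarrow> A \<in> Ob' \<Longrightarrow> tg g = B \<Longrightarrow> T2 A B \<cdot> (id' (fo T A) \<otimes> fa T g) = fa T (id' A \<otimes> g) \<cdot> T2 A (s g)"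
  using monfun_D(5)[OF MT, of "id' A" g] fun_ty[OF monfun_D(1)[OF MT]] by simp
lemma mf_natr_idR: assumes MT: "monoidal_functor M T T2 T0"
  shows "g \<in> Ar' \<Longrightarrow> A \<in> Ob' \<Longrightarrow> s g = B \<Longrightarrow> fa T (id' A \<otimes> g) \<cdot> T2 A B = T2 A (tg g) \<cdot> (id' (fo T A) \<otimes> fa T g)"
  using monfun_D(5)[OF MT, of "id' A" g] fun_ty[OF monfun_D(1)[OF MT]] by simp

lemma mf_comp: assumes MT: "monoidal_functor M T T2 T0" and MS: "monoidal_functor M S S2 S0"
  shows "monoidal_functor M (fcomp T S) (\<lambda>X Y. fa T (S2 X Y) \<cdot> T2 (fo S X) (fo S Y)) (fa T S0 \<cdot> T0)"
proof -
  note FT = monfun_D(1)[OF MT] and FS = monfun_D(1)[OF MS]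
  note [simp] = fun_ty(1-6)[OF FT] fun_ty(1-6)[OF FS] monfun_D(2-4,6-8)[OF MT] monfun_D(2-4,6-8)[OF MS]
  have lift: "\<And>g f r. g \<cdot> f = r \<Longrightarrow> f \<in> Ar' \<Longrightarrow> g \<in> Ar' \<Longrightarrow> tg f = s g \<Longrightarrow> fa T g \<cdot> fa T f = fa T r"
    using flift[OF FT] by blast
  show ?thesis unfolding monoidal_functor_def
  proof (intro conjI ballI)
    show "is_functor M M (fcomp T S)" by (rule fcomp_functor[OF FT FS])
  next
    fix X Y assume "X \<in> Ob'" "Y \<in> Ob'"
    then show "fa T (S2 X Y) \<cdot> T2 (fo S X) (fo S Y) \<in> hom M (fo (fcomp T S) X \<odot> fo (fcomp T S) Y) (fo (fcomp T S) (X \<odot> Y))"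
      unfolding hom_iff by simp
  next
    fix f g assume fg: "f \<in> Ar'" "g \<in> Ar'"
    have h: "fa T (S2 (tg f) (tg g)) \<cdot> fa T (fa S f \<otimes> fa S g) = fa T (fa S (f \<otimes> g)) \<cdot> fa T (S2 (s f) (s g))"
      using lift[OF monfun_D(5)[OF MS fg]] fg by simp
    show "cmp M (fa T (S2 (tg f) (tg g)) \<cdot> T2 (fo S (tg f)) (fo S (tg g))) (fa (fcomp T S) f \<otimes> fa (fcomp T S) g) =
        cmp M (fa (fcomp T S) (f \<otimes> g)) (fa T (S2 (s f) (s g)) \<cdot> T2 (fo S (s f)) (fo S (s g)))"
      using fg monfun_D(5)[OF MT, of "fa S f" "fa S g"] by (simp add: ext2[OF h])
  next
    show "fa T S0 \<cdot> T0 \<in> hom M I (fo (fcomp T S) I)" unfolding hom_iff by simp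
  next
    fix X Y Z assume X: "X \<in> Ob'" and Y: "Y \<in> Ob'" and Z: "Z \<in> Ob'"
    have h1: "fa T (fa S (asc M X Y Z)) \<cdot> (fa T (S2 (X \<odot> Y) Z) \<cdot> fa T (S2 X Y \<otimes> id' (fo S Z))) =
       fa T (S2 X (Y \<odot> Z)) \<cdot> (fa T (id' (fo S X) \<otimes> S2 Y Z) \<cdot> fa T (asc M (fo S X) (fo S Y) (fo S Z)))"
      using X Y Z monfun_D(9)[OF MS X Y Z] by (simp flip: fun_ty(6)[OF FT])
    show "cmp M (fa (fcomp T S) (asc M X Y Z))
           (cmp M (fa T (S2 (X \<odot> Y) Z) \<cdot> T2 (fo S (X \<odot> Y)) (fo S Z))
             (tnsa M (fa T (S2 X Y) \<cdot> T2 (fo S X) (fo S Y)) (idn M (fo (fcomp T S) Z)))) =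
          cmp M (fa T (S2 X (Y \<odot> Z)) \<cdot> T2 (fo S X) (fo S (Y \<odot> Z)))
           (cmp M (tnsa M (idn M (fo (fcomp T S) X)) (fa T (S2 Y Z) \<cdot> T2 (fo S Y) (fo S Z)))
             (asc M (fo (fcomp T S) X) (fo (fcomp T S) Y) (fo (fcomp T S) Z)))"
      using X Y Z
      by (simp add: tens_split_l tens_split_r ext2[OF mf_natl_id[OF MT]] ext3[OF h1]
          monfun_D(9)[OF MT] ext3[OF monfun_D(9)[OF MT]] ext2[OF mf_natr_idR[OF MT]])
  next
    fix X assume X: "X \<in> Ob'"
    have h1: "fa T (fa S (lu M X)) \<cdot> (fa T (S2 I X) \<cdot> fa T (S0 \<otimes> id' (fo S X))) = fa T (lu M (fo S X))"
      using X monfun_D(10)[OF MS X] by (simp flip: fun_ty(6)[OF FT])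
    show "cmp M (fa (fcomp T S) (lu M X))
           (cmp M (fa T (S2 I X) \<cdot> T2 (fo S I) (fo S X)) (tnsa M (fa T S0 \<cdot> T0) (idn M (fo (fcomp T S) X)))) =
          lu M (fo (fcomp T S) X)"
      using X
      by (simp add: tens_split_l ext2[OF mf_natl_id[OF MT]] ext3[OF h1] monfun_D(10)[OF MT])
  next
    fix X assume X: "X \<in> Ob'"
    have h1: "fa T (fa S (ru M X)) \<cdot> (fa T (S2 X I) \<cdot> fa T (id' (fo S X) \<otimes> S0)) = fa T (ru M (fo S X))"
      using X monfun_D(11)[OF MS X] by (simp flip: fun_ty(6)[OF FT])
    show "cmp M (fa (fcomp T S) (ru M X))
           (cmp M (fa T (S2 X I) \<cdot> T2 (fo S X) (fo S I)) (tnsa M (idn M (fo (fcomp T S) X)) (fa T S0 \<cdot> T0))) =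
          ru M (fo (fcomp T S) X)"
      using X
      by (simp add: tens_split_r ext2[OF mf_natr_id[OF MT]] ext3[OF h1] monfun_D(11)[OF MT])
  qed
qed

end

context th35 begin

abbreviation (input) "SC \<equiv> smash_comult M F DF G dG \<phi>"
abbreviation (input) "SE \<equiv> smash_counit M eF G eG"

lemma SC_def': "SC X = Fa (\<phi> (G1 X)) \<cdot> (Fa (Fa (dG X)) \<cdot> DF (G1 X))"
  unfolding smash_comult_def by simp
lemma SE_def': "SE X = eG X \<cdot> eF (G1 X)"
  unfolding smash_counit_def by simp

lemma SC_ty[simp]: "X \<in> Ob' \<Longrightarrow> SC X \<in> Ar'" "X \<in> Ob' \<Longrightarrow> s (SC X) = F1 (G1 X)"
  "X \<in> Ob' \<Longrightarrow> tg (SC X) = F1 (G1 (F1 (G1 X)))"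
  unfolding SC_def' by simp_all
lemma SE_ty[simp]: "X \<in> Ob' \<Longrightarrow> SE X \<in> Ar'" "X \<in> Ob' \<Longrightarrow> s (SE X) = F1 (G1 X)"
  "X \<in> Ob' \<Longrightarrow> tg (SE X) = X"
  unfolding SE_def' by simp_all

lemma SC_nat: assumes "f \<in> Ar'"
  shows "SC (tg f) \<cdot> Fa (Ga f) = Fa (Ga (Fa (Ga f))) \<cdot> SC (s f)"
proof -
  have h: "Fa (Fa (dG (tg f))) \<cdot> Fa (Fa (Ga f)) = Fa (Fa (Ga (Ga f))) \<cdot> Fa (Fa (dG (s f)))"
    using assms by (simp flip: F_cmp add: dG_nat)
  have h2: "Fa (\<phi> (G1 (tg f))) \<cdot> Fa (Fa (Ga (Ga f))) = Fa (Ga (Fa (Ga f))) \<cdot> Fa (\<phi> (G1 (s f)))"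
    using assms by (simp flip: F_cmp add: phi_natL)
  show ?thesis unfolding SC_def' using assms
    by (simp add: DF_natL ext2[OF DF_natL] h ext2[OF h] h2 ext2[OF h2])
qed

lemma SE_nat: assumes "f \<in> Ar'"
  shows "SE (tg f) \<cdot> Fa (Ga f) = f \<cdot> SE (s f)"
  unfolding SE_def' using assms by (simp add: natL natL')

lemma K1: assumes X: "X \<in> Ob'"
  shows "dG (F1 (G1 X)) \<cdot> (\<phi> (G1 X) \<cdot> Fa (dG X)) = Ga (\<phi> (G1 X)) \<cdot> (Ga (Fa (dG X)) \<cdot> (\<phi> (G1 X) \<cdot> Fa (dG X)))"
proof -
  have h1: "Fa (dG (G1 X)) \<cdot> Fa (dG X) = Fa (Ga (dG X)) \<cdot> Fa (dG X)"
    using X by (simp flip: F_cmp add: G_coass)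
  show ?thesis using X by (simp add: ext2[OF phi_d[symmetric]] h1 phi_natL ext2[OF phi_natL])
qed

lemma K2: assumes X: "X \<in> Ob'"
  shows "\<phi> (G1 (F1 (G1 X))) \<cdot> (Fa (dG (F1 (G1 X))) \<cdot> (Fa (\<phi> (G1 X)) \<cdot> (Fa (Fa (dG X)) \<cdot> DF (G1 X)))) =
         Ga (Fa (\<phi> (G1 X))) \<cdot> (Ga (Fa (Fa (dG X))) \<cdot> (Ga (DF (G1 X)) \<cdot> (\<phi> (G1 X) \<cdot> Fa (dG X))))"
proof -
  have h1: "Fa (dG (F1 (G1 X))) \<cdot> (Fa (\<phi> (G1 X)) \<cdot> Fa (Fa (dG X))) =
     Fa (Ga (\<phi> (G1 X))) \<cdot> (Fa (Ga (Fa (dG X))) \<cdot> (Fa (\<phi> (G1 X)) \<cdot> Fa (Fa (dG X))))"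
    using X by (simp flip: F_cmp add: K1)
  show ?thesis using X
    by (simp add: ext3[OF h1] ext2[OF phi_D[symmetric]] DF_natL phi_natR ext2[OF phi_natR])
qed

lemma SC_coass: assumes X: "X \<in> Ob'"
  shows "SC (F1 (G1 X)) \<cdot> SC X = Fa (Ga (SC X)) \<cdot> SC X"
proof -
  have l: "SC (F1 (G1 X)) \<cdot> SC X = Fa (\<phi> (G1 (F1 (G1 X))) \<cdot> (Fa (dG (F1 (G1 X))) \<cdot> (Fa (\<phi> (G1 X)) \<cdot> (Fa (Fa (dG X)) \<cdot> DF (G1 X))))) \<cdot> DF (G1 X)"
    unfolding SC_def' using X by (simp add: DF_natL ext2[OF DF_natL] F_coass)
  have r: "Fa (Ga (SC X)) \<cdot> SC X = Fa (Ga (Fa (\<phi> (G1 X))) \<cdot> (Ga (Fa (Fa (dG X))) \<cdot> (Ga (DF (G1 X)) \<cdot> (\<phi> (G1 X) \<cdot> Fa (dG X))))) \<cdot> DF (G1 X)"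
    unfolding SC_def' using X by simp
  show ?thesis using l r K2[OF X] by simp
qed

lemma SC_cu1: assumes X: "X \<in> Ob'" shows "SE (F1 (G1 X)) \<cdot> SC X = id' (F1 (G1 X))"
proof -
  have h1: "Fa (eG (G1 X)) \<cdot> Fa (dG X) = id' (F1 (G1 X))"
    using X by (simp flip: F_cmp add: G_cu1)
  show ?thesis unfolding SC_def' SE_def' using X
    by (simp add: eF_natL ext2[OF eF_natL] F_cu1 ext2[OF phi_eG] h1)
qed

lemma SC_cu2: assumes X: "X \<in> Ob'" shows "Fa (Ga (SE X)) \<cdot> SC X = id' (F1 (G1 X))"
proof -
  have h1: "Fa (Ga (eF (G1 X))) \<cdot> Fa (\<phi> (G1 X)) = Fa (eF (G1 (G1 X)))"
    using X by (simp flip: F_cmp add: phi_eF)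
  have h2: "Fa (eF (G1 (G1 X))) \<cdot> Fa (Fa (dG X)) = Fa (dG X) \<cdot> Fa (eF (G1 X))"
    using X by (simp flip: F_cmp add: eF_natL)
  have h3: "Fa (Ga (eG X)) \<cdot> Fa (dG X) = id' (F1 (G1 X))"
    using X by (simp flip: F_cmp add: G_cu2)
  show ?thesis unfolding SC_def' SE_def' using X
    by (simp add: ext2[OF h1] ext2[OF h2] F_cu2 ext2[OF F_cu2] h3)
qed

abbreviation (input) "S2 \<equiv> smash_F2 M F F2 G G2"
abbreviation (input) "S0 \<equiv> smash_F0 M F F0 G0"
lemma S2_def': "S2 X Y = Fa (G2 X Y) \<cdot> F2 (G1 X) (G1 Y)" unfolding smash_F2_def by simp
lemma S0_def': "S0 = Fa G0 \<cdot> F0" unfolding smash_F0_def by simp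

lemma alpha_fwd: assumes X: "X \<in> Ob'" and Y: "Y \<in> Ob'" and P: P2T
  shows "Fa (Ga (S2 X Y)) \<cdot> (S2 (F1 (G1 X)) (F1 (G1 Y)) \<cdot> (SC X \<otimes> SC Y)) = SC (X \<odot> Y) \<cdot> S2 X Y"
proof -
  have h3: "Fa (Fa (dG (X \<odot> Y))) \<cdot> Fa (Fa (G2 X Y)) =
     Fa (Fa (Ga (G2 X Y))) \<cdot> (Fa (Fa (G2 (G1 X) (G1 Y))) \<cdot> Fa (Fa (dG X \<otimes> dG Y)))"
    using X Y by (simp flip: F_cmp add: G2_D[symmetric])
  have h4: "Fa (Fa (dG X \<otimes> dG Y)) \<cdot> Fa (F2 (G1 X) (G1 Y)) =
     Fa (F2 (G1 (G1 X)) (G1 (G1 Y))) \<cdot> Fa (Fa (dG X) \<otimes> Fa (dG Y))"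
    using X Y by (simp flip: F_cmp add: F2_natR)
  have h5: "Fa (\<phi> (G1 (X \<odot> Y))) \<cdot> Fa (Fa (Ga (G2 X Y))) = Fa (Ga (Fa (G2 X Y))) \<cdot> Fa (\<phi> (G1 X \<odot> G1 Y))"
    using X Y by (simp flip: F_cmp add: phi_natR)
  have p: "\<phi> (G1 X \<odot> G1 Y) \<cdot> (Fa (G2 (G1 X) (G1 Y)) \<cdot> F2 (G1 (G1 X)) (G1 (G1 Y))) =
        Ga (F2 (G1 X) (G1 Y)) \<cdot> (G2 (F1 (G1 X)) (F1 (G1 Y)) \<cdot> (\<phi> (G1 X) \<otimes> \<phi> (G1 Y)))"
    using P X Y by simp
  have h6: "Fa (\<phi> (G1 X \<odot> G1 Y)) \<cdot> (Fa (Fa (G2 (G1 X) (G1 Y))) \<cdot> Fa (F2 (G1 (G1 X)) (G1 (G1 Y)))) =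
        Fa (Ga (F2 (G1 X) (G1 Y))) \<cdot> (Fa (G2 (F1 (G1 X)) (F1 (G1 Y))) \<cdot> Fa (\<phi> (G1 X) \<otimes> \<phi> (G1 Y)))"
    using X Y by (simp flip: F_cmp add: p)
  show ?thesis unfolding SC_def' S2_def' using X Y
    by (simp add: ext2[OF DF_natL] F2_D[symmetric] ext2[OF F2_D[symmetric]] h3 ext2[OF h3] h4 ext2[OF h4] h5 ext2[OF h5]
         ext3[OF h6] F2_natR ext2[OF F2_natR] tens2 ext2[OF tens2])
qed


lemma pi_SC: assumes Z: "Z \<in> Ob'"
  shows "Ga (Fa (eG Z)) \<cdot> (eF (G1 (F1 (G1 Z))) \<cdot> SC Z) = \<phi> Z"
  unfolding SC_def' using Z
  by (simp add: eF_natL ext2[OF eF_natL] F_cu1 ext2[OF phi_natR] Gcu2F)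

lemma alpha_bwd: assumes X: "X \<in> Ob'" and Y: "Y \<in> Ob'"
  and A: "Fa (Ga (S2 X Y)) \<cdot> (S2 (F1 (G1 X)) (F1 (G1 Y)) \<cdot> (SC X \<otimes> SC Y)) = SC (X \<odot> Y) \<cdot> S2 X Y"
  shows "\<phi> (X \<odot> Y) \<cdot> (Fa (G2 X Y) \<cdot> F2 (G1 X) (G1 Y)) = Ga (F2 X Y) \<cdot> (G2 (F1 X) (F1 Y) \<cdot> (\<phi> X \<otimes> \<phi> Y))"
proof -
  let ?p = "Ga (Fa (eG (X \<odot> Y))) \<cdot> eF (G1 (F1 (G1 (X \<odot> Y))))"
  have E: "?p \<cdot> (Fa (Ga (S2 X Y)) \<cdot> (S2 (F1 (G1 X)) (F1 (G1 Y)) \<cdot> (SC X \<otimes> SC Y))) = ?p \<cdot> (SC (X \<odot> Y) \<cdot> S2 X Y)"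
    using A by simp
  have L: "?p \<cdot> (SC (X \<odot> Y) \<cdot> S2 X Y) = \<phi> (X \<odot> Y) \<cdot> (Fa (G2 X Y) \<cdot> F2 (G1 X) (G1 Y))"
    using X Y ext2[OF pi_SC, of "X \<odot> Y" "S2 X Y"] unfolding S2_def' by simp
  have h1: "Ga (Fa (eG (X \<odot> Y))) \<cdot> Ga (Fa (G2 X Y)) = Ga (Fa (eG X \<otimes> eG Y))"
    using X Y by (simp flip: F_cmp G_cmp add: G2_e)
  have h2: "Ga (Fa (eG X \<otimes> eG Y)) \<cdot> Ga (F2 (G1 X) (G1 Y)) = Ga (F2 X Y) \<cdot> Ga (Fa (eG X) \<otimes> Fa (eG Y))"
    using X Y by (simp flip: G_cmp add: F2_natR)
  have R: "?p \<cdot> (Fa (Ga (S2 X Y)) \<cdot> (S2 (F1 (G1 X)) (F1 (G1 Y)) \<cdot> (SC X \<otimes> SC Y))) =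
       Ga (F2 X Y) \<cdot> (G2 (F1 X) (F1 Y) \<cdot> (\<phi> X \<otimes> \<phi> Y))"
    unfolding S2_def' using X Y
    by (simp add: eF_natL ext2[OF eF_natL] ext2[OF F2_e] tens2 ext2[OF tens2] h1 ext2[OF h1] h2 ext2[OF h2]
       G2_natR ext2[OF G2_natR] pi_SC)
  show ?thesis using E L R by simp
qed

lemma beta: assumes X: "X \<in> Ob'" and Y: "Y \<in> Ob'"
  shows "SE (X \<odot> Y) \<cdot> S2 X Y = SE X \<otimes> SE Y"
  unfolding SE_def' S2_def' using X Y
  by (simp add: eF_natL ext2[OF eF_natL] F2_e ext2[OF G2_e] tens2)

lemma delta: "SE I \<cdot> S0 = id' I"
  unfolding SE_def' S0_def'
  by (simp add: eF_natL ext2[OF eF_natL] F0_e ext2[OF G0_e] G0_e)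

lemma gamma_fwd: assumes P: P2U
  shows "Fa (Ga S0) \<cdot> S0 = SC I \<cdot> S0"
proof -
  have h1: "Fa (Fa (dG I)) \<cdot> Fa (Fa G0) = Fa (Fa (Ga G0)) \<cdot> Fa (Fa G0)"
    by (simp flip: F_cmp add: G0_D)
  have h2: "Fa (\<phi> (G1 I)) \<cdot> Fa (Fa (Ga G0)) = Fa (Ga (Fa G0)) \<cdot> Fa (\<phi> I)"
    by (simp flip: F_cmp add: phi_natR)
  have h3: "Fa (\<phi> I) \<cdot> (Fa (Fa G0) \<cdot> Fa F0) = Fa (Ga F0) \<cdot> Fa G0"
    by (simp flip: F_cmp add: P)
  show ?thesis unfolding SC_def' S0_def'
    by (simp add: ext2[OF DF_natL] F0_D[symmetric] ext2[OF h1] ext2[OF h2] h3 ext3[OF h3])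
qed

lemma gamma_bwd: assumes A: "Fa (Ga S0) \<cdot> S0 = SC I \<cdot> S0"
  shows P2U
proof -
  let ?p = "Ga (Fa (eG I)) \<cdot> eF (G1 (F1 (G1 I)))"
  have E: "?p \<cdot> (Fa (Ga S0) \<cdot> S0) = ?p \<cdot> (SC I \<cdot> S0)" using A by simp
  have L: "?p \<cdot> (SC I \<cdot> S0) = \<phi> I \<cdot> (Fa G0 \<cdot> F0)"
    using ext2[OF pi_SC, of I S0] unfolding S0_def' by simp
  have h1: "Ga (Fa (eG I)) \<cdot> Ga (Fa G0) = id' (G1 (F1 I))"
    by (simp flip: F_cmp G_cmp add: G0_e)
  have R: "?p \<cdot> (Fa (Ga S0) \<cdot> S0) = Ga F0 \<cdot> G0"
    unfolding S0_def'
    by (simp add: eF_natL ext2[OF eF_natL] F0_e ext2[OF h1])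
  show ?thesis using E L R by simp
qed

end

context th35 begin

lemma smash_comonad: "comonad M (fcomp F G) SC SE"
  unfolding comonad_def
proof (intro conjI ballI)
  show "is_functor M M (fcomp F G)" by (rule fcomp_functor[OF FF FG])
  show "nat_trans M M (fcomp F G) (fcomp (fcomp F G) (fcomp F G)) SC"
    unfolding nat_trans_def hom_iff using SC_nat by simp
  show "nat_trans M M (fcomp F G) id_ftr SE"
    unfolding nat_trans_def hom_iff using SE_nat by simp
qed (simp_all add: SC_coass SC_cu1 SC_cu2)

lemma smash_monfun: "monoidal_functor M (fcomp F G) S2 S0"
proof -
  have "S2 = (\<lambda>X Y. Fa (G2 X Y) \<cdot> F2 (G1 X) (G1 Y))" by (intro ext) (simp add: S2_def')
  moreover have "S0 = Fa G0 \<cdot> F0" by (simp add: S0_def')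
  ultimately show ?thesis using mf_comp[OF MF MG] by simp
qed

lemma P3_iff: "bicomonad M (fcomp F G) SC SE S2 S0 \<longleftrightarrow> P2T \<and> P2U"
proof
  assume B: "bicomonad M (fcomp F G) SC SE S2 S0"
  have "P2T"
  proof (intro ballI)
    fix X Y assume X: "X \<in> Ob'" and Y: "Y \<in> Ob'"
    show "\<phi> (X \<odot> Y) \<cdot> (Fa (G2 X Y) \<cdot> F2 (G1 X) (G1 Y)) = Ga (F2 X Y) \<cdot> (G2 (F1 X) (F1 Y) \<cdot> (\<phi> X \<otimes> \<phi> Y))"
      by (rule alpha_bwd[OF X Y]) (use bicomonad_D(3)[OF B X Y] in simp)
  qed
  moreover have "P2U" by (rule gamma_bwd) (use bicomonad_D(5)[OF B] in simp)
  ultimately show "P2T \<and> P2U" by blast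
next
  assume P: "P2T \<and> P2U"
  show "bicomonad M (fcomp F G) SC SE S2 S0"
    unfolding bicomonad_def
    using smash_comonad smash_monfun alpha_fwd[OF _ _ conjunct1[OF P]] beta gamma_fwd[OF conjunct2[OF P]] delta
    by simp
qed

end

context th35 begin

abbreviation (input) "BC \<equiv> bicomod_moncat M F DF eF F2 F0 G dG eG G2 G0 \<phi>"
abbreviation (input) "bcm \<equiv> is_bicomod M F DF eF G dG eG \<phi>"
abbreviation (input) "bmor \<equiv> is_bicomod_mor M F G"
abbreviation (input) "TT \<equiv> bc_tns M F2 G2"

lemma BC_simps[simp]: "Ob BC = {A. bcm A}"
  "Ar BC = {(A, f, B). bcm A \<and> bcm B \<and> bmor A f B}"
  "src BC = fst" "tgt BC = (\<lambda>t. snd (snd t))"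
  "cmp BC g f = (fst f, fst (snd g) \<cdot> fst (snd f), snd (snd g))"
  "idn BC A = (A, id' (fst A), A)"
  "tns BC = TT"
  "tnsa BC f g = (TT (fst f) (fst g), fst (snd f) \<otimes> fst (snd g), TT (snd (snd f)) (snd (snd g)))"
  "munit BC = (I, F0, G0)"
  "asc BC A B C = (TT (TT A B) C, asc M (fst A) (fst B) (fst C), TT A (TT B C))"
  "lu BC A = (TT (I, F0, G0) A, lu M (fst A), A)"
  "ru BC A = (TT A (I, F0, G0), ru M (fst A), A)"
  unfolding bicomod_moncat_def Let_def by simp_all

lemma bcm_iff: "bcm (X, \<theta>, \<rho>) \<longleftrightarrow> X \<in> Ob' \<and> \<theta> \<in> Ar' \<and> s \<theta> = X \<and> tg \<theta> = F1 X \<and> \<rho> \<in> Ar' \<and> s \<rho> = X \<and> tg \<rho> = G1 X \<and>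
   DF X \<cdot> \<theta> = Fa \<theta> \<cdot> \<theta> \<and> eF X \<cdot> \<theta> = id' X \<and> dG X \<cdot> \<rho> = Ga \<rho> \<cdot> \<rho> \<and> eG X \<cdot> \<rho> = id' X \<and>
   \<phi> X \<cdot> (Fa \<rho> \<cdot> \<theta>) = Ga \<theta> \<cdot> \<rho>"
  unfolding is_bicomod_def hom_iff by auto

lemma bmor_iff: "bmor (X, \<theta>, \<rho>) f (Y, \<theta>', \<rho>') \<longleftrightarrow> f \<in> Ar' \<and> s f = X \<and> tg f = Y \<and>
   \<theta>' \<cdot> f = Fa f \<cdot> \<theta> \<and> \<rho>' \<cdot> f = Ga f \<cdot> \<rho>"
  unfolding is_bicomod_mor_def hom_iff by auto

lemma TT_simp[simp]: "TT (X, \<theta>, \<rho>) (Y, \<theta>', \<rho>') = (X \<odot> Y, F2 X Y \<cdot> (\<theta> \<otimes> \<theta>'), G2 X Y \<cdot> (\<rho> \<otimes> \<rho>'))"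
  unfolding bc_tns_def by simp
lemma TT_fst[simp]: "fst (TT A B) = fst A \<odot> fst B"
  unfolding bc_tns_def by (cases A; cases B) simp

lemma g_coalg_tens: assumes B: "bicomonad M T d e T2 T0"
  and X: "X \<in> Ob'" "a \<in> Ar'" "s a = X" "tg a = fo T X" "d X \<cdot> a = fa T a \<cdot> a" "e X \<cdot> a = id' X"
  and Y: "Y \<in> Ob'" "b \<in> Ar'" "s b = Y" "tg b = fo T Y" "d Y \<cdot> b = fa T b \<cdot> b" "e Y \<cdot> b = id' Y"
  shows "d (X \<odot> Y) \<cdot> (T2 X Y \<cdot> (a \<otimes> b)) = fa T (T2 X Y \<cdot> (a \<otimes> b)) \<cdot> (T2 X Y \<cdot> (a \<otimes> b))"
    "e (X \<odot> Y) \<cdot> (T2 X Y \<cdot> (a \<otimes> b)) = id' (X \<odot> Y)"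
proof -
  note C = bicomonad_D(1)[OF B] and MT = bicomonad_D(2)[OF B]
  note FT = comonad_D(1)[OF C]
  note [simp] = fun_ty(1-6)[OF FT] nt_ty(1-3)[OF comonad_D(2)[OF C], simplified]
     nt_ty(1-3)[OF comonad_D(3)[OF C], simplified] monfun_D(2-4)[OF MT] monfun_D(6-8)[OF MT]
  have n: "\<And>f g. f \<in> Ar' \<Longrightarrow> g \<in> Ar' \<Longrightarrow> s f = X \<Longrightarrow> s g = Y \<Longrightarrow>
      fa T (f \<otimes> g) \<cdot> T2 X Y = T2 (tg f) (tg g) \<cdot> (fa T f \<otimes> fa T g)"
    using monfun_D(5)[OF MT] by metis
  have dd: "d (X \<odot> Y) \<cdot> T2 X Y = fa T (T2 X Y) \<cdot> (T2 (fo T X) (fo T Y) \<cdot> (d X \<otimes> d Y))"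
    using bicomonad_D(3)[OF B X(1) Y(1)] by simp
  show "d (X \<odot> Y) \<cdot> (T2 X Y \<cdot> (a \<otimes> b)) = fa T (T2 X Y \<cdot> (a \<otimes> b)) \<cdot> (T2 X Y \<cdot> (a \<otimes> b))"
    using X Y by (simp add: ext2[OF dd] tens2 ext2[OF tens2] n ext2[OF n])
  show "e (X \<odot> Y) \<cdot> (T2 X Y \<cdot> (a \<otimes> b)) = id' (X \<odot> Y)"
    using X Y by (simp add: ext2[OF bicomonad_D(4)[OF B]] tens2)
qed

lemma g_mor_tens: assumes MT: "monoidal_functor M T T2 T0"
  and f: "f \<in> Ar'" "s f = X" "tg f = X2" and g: "g \<in> Ar'" "s g = Y" "tg g = Y2"
  and a: "a \<in> Ar'" "s a = X" "tg a = fo T X" and a2: "a2 \<in> Ar'" "s a2 = X2" "tg a2 = fo T X2"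
  and b: "b \<in> Ar'" "s b = Y" "tg b = fo T Y" and b2: "b2 \<in> Ar'" "s b2 = Y2" "tg b2 = fo T Y2"
  and ma: "a2 \<cdot> f = fa T f \<cdot> a" and mb: "b2 \<cdot> g = fa T g \<cdot> b"
  shows "(T2 X2 Y2 \<cdot> (a2 \<otimes> b2)) \<cdot> (f \<otimes> g) = fa T (f \<otimes> g) \<cdot> (T2 X Y \<cdot> (a \<otimes> b))"
proof -
  note FT = monfun_D(1)[OF MT]
  note [simp] = fun_ty(1-6)[OF FT] monfun_D(2-4)[OF MT] monfun_D(6-8)[OF MT]
  have n: "fa T (f \<otimes> g) \<cdot> T2 X Y = T2 X2 Y2 \<cdot> (fa T f \<otimes> fa T g)"
    using monfun_D(5)[OF MT f(1) g(1)] f g by simp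
  have X: "X \<in> Ob'" "X2 \<in> Ob'" "Y \<in> Ob'" "Y2 \<in> Ob'" using f g ar_src ar_tgt by blast+
  show ?thesis using X f g a a2 b b2 ma mb by (simp add: ext2[OF n] tens2)
qed

lemma g_asc: assumes MT: "monoidal_functor M T T2 T0"
  and a: "a \<in> Ar'" "s a = X" "tg a = fo T X" and b: "b \<in> Ar'" "s b = Y" "tg b = fo T Y"
  and c: "c \<in> Ar'" "s c = Z" "tg c = fo T Z"
  shows "(T2 X (Y \<odot> Z) \<cdot> (a \<otimes> (T2 Y Z \<cdot> (b \<otimes> c)))) \<cdot> asc M X Y Z =
     fa T (asc M X Y Z) \<cdot> (T2 (X \<odot> Y) Z \<cdot> ((T2 X Y \<cdot> (a \<otimes> b)) \<otimes> c))"
proof -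
  note FT = monfun_D(1)[OF MT]
  note [simp] = fun_ty(1-6)[OF FT] monfun_D(2-4)[OF MT] monfun_D(6-8)[OF MT]
  have O: "X \<in> Ob'" "Y \<in> Ob'" "Z \<in> Ob'" using a b c ar_src by blast+
  have sp: "(T2 X Y \<cdot> (a \<otimes> b)) \<otimes> c = (T2 X Y \<otimes> id' (fo T Z)) \<cdot> ((a \<otimes> b) \<otimes> c)"
    using interchange[of "a \<otimes> b" "T2 X Y" c "id' (fo T Z)"] O a b c by simp
  have an: "asc M (fo T X) (fo T Y) (fo T Z) \<cdot> ((a \<otimes> b) \<otimes> c) = (a \<otimes> (b \<otimes> c)) \<cdot> asc M X Y Z"
    using asc_nat[OF a(1) b(1) c(1)] a b c by simp
  have "fa T (asc M X Y Z) \<cdot> (T2 (X \<odot> Y) Z \<cdot> ((T2 X Y \<cdot> (a \<otimes> b)) \<otimes> c)) =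
      fa T (asc M X Y Z) \<cdot> (T2 (X \<odot> Y) Z \<cdot> ((T2 X Y \<otimes> id' (fo T Z)) \<cdot> ((a \<otimes> b) \<otimes> c)))"
    by (simp only: sp)
  also have "... = T2 X (Y \<odot> Z) \<cdot> ((id' (fo T X) \<otimes> T2 Y Z) \<cdot> (asc M (fo T X) (fo T Y) (fo T Z) \<cdot> ((a \<otimes> b) \<otimes> c)))"
    using O a b c by (simp add: ext3[OF monfun_D(9)[OF MT]])
  also have "... = T2 X (Y \<odot> Z) \<cdot> ((id' (fo T X) \<otimes> T2 Y Z) \<cdot> ((a \<otimes> (b \<otimes> c)) \<cdot> asc M X Y Z))"
    by (simp only: an)
  also have "... = (T2 X (Y \<odot> Z) \<cdot> (a \<otimes> (T2 Y Z \<cdot> (b \<otimes> c)))) \<cdot> asc M X Y Z"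
    using O a b c by (simp add: tens2 ext2[OF tens2])
  finally show ?thesis by simp
qed

lemma g_lu: assumes MT: "monoidal_functor M T T2 T0"
  and a: "a \<in> Ar'" "s a = X" "tg a = fo T X"
  shows "a \<cdot> lu M X = fa T (lu M X) \<cdot> (T2 I X \<cdot> (T0 \<otimes> a))"
    "a \<cdot> ru M X = fa T (ru M X) \<cdot> (T2 X I \<cdot> (a \<otimes> T0))"
proof -
  note FT = monfun_D(1)[OF MT]
  note [simp] = fun_ty(1-6)[OF FT] monfun_D(2-4)[OF MT] monfun_D(6-8)[OF MT]
  have O: "X \<in> Ob'" using a ar_src by blast
  have sp: "T0 \<otimes> a = (T0 \<otimes> id' (fo T X)) \<cdot> (id' I \<otimes> a)"
    using interchange[of "id' I" T0 a "id' (fo T X)"] O a by simp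
  have sp2: "a \<otimes> T0 = (id' (fo T X) \<otimes> T0) \<cdot> (a \<otimes> id' I)"
    using interchange[of a "id' (fo T X)" "id' I" T0] O a by simp
  have l: "lu M (fo T X) \<cdot> (id' I \<otimes> a) = a \<cdot> lu M X" using lu_nat(1)[OF a(1)] a by simp
  have r: "ru M (fo T X) \<cdot> (a \<otimes> id' I) = a \<cdot> ru M X" using lu_nat(2)[OF a(1)] a by simp
  have "fa T (lu M X) \<cdot> (T2 I X \<cdot> (T0 \<otimes> a)) = fa T (lu M X) \<cdot> (T2 I X \<cdot> ((T0 \<otimes> id' (fo T X)) \<cdot> (id' I \<otimes> a)))"
    by (simp only: sp)
  also have "... = lu M (fo T X) \<cdot> (id' I \<otimes> a)"
    using O a by (simp add: ext3[OF monfun_D(10)[OF MT]])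
  finally show "a \<cdot> lu M X = fa T (lu M X) \<cdot> (T2 I X \<cdot> (T0 \<otimes> a))" using l by simp
  have "fa T (ru M X) \<cdot> (T2 X I \<cdot> (a \<otimes> T0)) = fa T (ru M X) \<cdot> (T2 X I \<cdot> ((id' (fo T X) \<otimes> T0) \<cdot> (a \<otimes> id' I)))"
    by (simp only: sp2)
  also have "... = ru M (fo T X) \<cdot> (a \<otimes> id' I)"
    using O a by (simp add: ext3[OF monfun_D(11)[OF MT]])
  finally show "a \<cdot> ru M X = fa T (ru M X) \<cdot> (T2 X I \<cdot> (a \<otimes> T0))" using r by simp
qed

lemma tensor_compat:
  assumes P2: "\<And>X Y. X \<in> Ob' \<Longrightarrow> Y \<in> Ob' \<Longrightarrow> \<phi> (X \<odot> Y) \<cdot> (Fa (G2 X Y) \<cdot> F2 (G1 X) (G1 Y)) =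
        Ga (F2 X Y) \<cdot> (G2 (F1 X) (F1 Y) \<cdot> (\<phi> X \<otimes> \<phi> Y))"
  and X: "X \<in> Ob'" "\<theta> \<in> Ar'" "s \<theta> = X" "tg \<theta> = F1 X" "\<rho> \<in> Ar'" "s \<rho> = X" "tg \<rho> = G1 X"
      "\<phi> X \<cdot> (Fa \<rho> \<cdot> \<theta>) = Ga \<theta> \<cdot> \<rho>"
  and Y: "Y \<in> Ob'" "\<theta>' \<in> Ar'" "s \<theta>' = Y" "tg \<theta>' = F1 Y" "\<rho>' \<in> Ar'" "s \<rho>' = Y" "tg \<rho>' = G1 Y"
      "\<phi> Y \<cdot> (Fa \<rho>' \<cdot> \<theta>') = Ga \<theta>' \<cdot> \<rho>'"
  shows "\<phi> (X \<odot> Y) \<cdot> (Fa (G2 X Y \<cdot> (\<rho> \<otimes> \<rho>')) \<cdot> (F2 X Y \<cdot> (\<theta> \<otimes> \<theta>'))) =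
         Ga (F2 X Y \<cdot> (\<theta> \<otimes> \<theta>')) \<cdot> (G2 X Y \<cdot> (\<rho> \<otimes> \<rho>'))"
proof -
  have n1: "Fa (\<rho> \<otimes> \<rho>') \<cdot> F2 X Y = F2 (G1 X) (G1 Y) \<cdot> (Fa \<rho> \<otimes> Fa \<rho>')"
    using F2_nat[of \<rho> \<rho>'] X Y by simp
  have "\<phi> (X \<odot> Y) \<cdot> (Fa (G2 X Y \<cdot> (\<rho> \<otimes> \<rho>')) \<cdot> (F2 X Y \<cdot> (\<theta> \<otimes> \<theta>'))) =
        \<phi> (X \<odot> Y) \<cdot> (Fa (G2 X Y) \<cdot> (F2 (G1 X) (G1 Y) \<cdot> ((Fa \<rho> \<otimes> Fa \<rho>') \<cdot> (\<theta> \<otimes> \<theta>'))))"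
    using X Y by (simp add: ext2[OF n1])
  also have "... = Ga (F2 X Y) \<cdot> (G2 (F1 X) (F1 Y) \<cdot> ((\<phi> X \<otimes> \<phi> Y) \<cdot> ((Fa \<rho> \<otimes> Fa \<rho>') \<cdot> (\<theta> \<otimes> \<theta>'))))"
    using X Y by (simp add: ext3[OF P2])
  also have "... = Ga (F2 X Y) \<cdot> (G2 (F1 X) (F1 Y) \<cdot> ((\<phi> X \<cdot> (Fa \<rho> \<cdot> \<theta>)) \<otimes> (\<phi> Y \<cdot> (Fa \<rho>' \<cdot> \<theta>'))))"
    using X Y by (simp add: tens3)
  also have "... = Ga (F2 X Y) \<cdot> (G2 (F1 X) (F1 Y) \<cdot> ((Ga \<theta> \<otimes> Ga \<theta>') \<cdot> (\<rho> \<otimes> \<rho>')))"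
    using X Y by (simp add: tens2)
  also have "... = Ga (F2 X Y) \<cdot> (Ga (\<theta> \<otimes> \<theta>') \<cdot> (G2 X Y \<cdot> (\<rho> \<otimes> \<rho>')))"
  proof -
    have h: "G2 (F1 X) (F1 Y) \<cdot> (Ga \<theta> \<otimes> Ga \<theta>') = Ga (\<theta> \<otimes> \<theta>') \<cdot> G2 X Y"
      using G2_nat[of \<theta> \<theta>'] X Y by simp
    show ?thesis using X Y by (simp add: ext2[OF h])
  qed
  finally show ?thesis using X Y by simp
qed

lemma ObBC_E: assumes "A \<in> Ob BC"
  obtains X \<theta> \<rho> where "A = (X, \<theta>, \<rho>)" "bcm (X, \<theta>, \<rho>)"
  using assms by (cases A) auto

lemma ArBC_E: assumes "x \<in> Ar BC"
  obtains X \<theta> \<rho> f Y \<theta>' \<rho>' where "x = ((X, \<theta>, \<rho>), f, (Y, \<theta>', \<rho>'))" "bcm (X, \<theta>, \<rho>)" "bcm (Y, \<theta>', \<rho>')"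
    "bmor (X, \<theta>, \<rho>) f (Y, \<theta>', \<rho>')"
  using assms by (cases x) auto

lemma bcm_tens: assumes P: P2T and A: "bcm (X, \<theta>, \<rho>)" and B: "bcm (Y, \<theta>', \<rho>')"
  shows "bcm (TT (X, \<theta>, \<rho>) (Y, \<theta>', \<rho>'))"
proof -
  note a = A[unfolded bcm_iff] and b = B[unfolded bcm_iff]
  have c: "\<phi> (X \<odot> Y) \<cdot> (Fa (G2 X Y \<cdot> (\<rho> \<otimes> \<rho>')) \<cdot> (F2 X Y \<cdot> (\<theta> \<otimes> \<theta>'))) =
         Ga (F2 X Y \<cdot> (\<theta> \<otimes> \<theta>')) \<cdot> (G2 X Y \<cdot> (\<rho> \<otimes> \<rho>'))"
    by (rule tensor_compat) (use P a b in auto)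
  note f = g_coalg_tens[OF BF, of X \<theta> Y \<theta>'] and g = g_coalg_tens[OF BG, of X \<rho> Y \<rho>']
  show ?thesis unfolding TT_simp bcm_iff using a b f g c by simp
qed

lemma bcm_unit: assumes P: P2U shows "bcm (I, F0, G0)"
  unfolding bcm_iff using P F0_D F0_e G0_D G0_e by simp

lemma bcm_fst: "bcm A \<Longrightarrow> fst A \<in> Ob'"
  by (cases A) (simp add: bcm_iff)

lemma bmor_tnsa: assumes "bcm (X, \<theta>, \<rho>)" "bcm (Y, \<theta>', \<rho>')" "bcm (X2, \<theta>2, \<rho>2)" "bcm (Y2, \<theta>2', \<rho>2')"
  and "bmor (X, \<theta>, \<rho>) f (X2, \<theta>2, \<rho>2)" "bmor (Y, \<theta>', \<rho>') g (Y2, \<theta>2', \<rho>2')"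
  shows "bmor (TT (X, \<theta>, \<rho>) (Y, \<theta>', \<rho>')) (f \<otimes> g) (TT (X2, \<theta>2, \<rho>2) (Y2, \<theta>2', \<rho>2'))"
proof -
  note h = assms[unfolded bcm_iff bmor_iff]
  have 1: "(F2 X2 Y2 \<cdot> (\<theta>2 \<otimes> \<theta>2')) \<cdot> (f \<otimes> g) = Fa (f \<otimes> g) \<cdot> (F2 X Y \<cdot> (\<theta> \<otimes> \<theta>'))"
    by (rule g_mor_tens[OF MF]) (use h in auto)
  have 2: "(G2 X2 Y2 \<cdot> (\<rho>2 \<otimes> \<rho>2')) \<cdot> (f \<otimes> g) = Ga (f \<otimes> g) \<cdot> (G2 X Y \<cdot> (\<rho> \<otimes> \<rho>'))"
    by (rule g_mor_tens[OF MG]) (use h in auto)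
  show ?thesis unfolding TT_simp bmor_iff using h 1 2 by simp
qed

lemma bmor_asc: assumes "bcm (X, \<theta>, \<rho>)" "bcm (Y, \<theta>', \<rho>')" "bcm (Z, \<theta>'', \<rho>'')"
  shows "bmor (TT (TT (X, \<theta>, \<rho>) (Y, \<theta>', \<rho>')) (Z, \<theta>'', \<rho>'')) (asc M X Y Z) (TT (X, \<theta>, \<rho>) (TT (Y, \<theta>', \<rho>') (Z, \<theta>'', \<rho>'')))"
proof -
  note h = assms[unfolded bcm_iff]
  have 1: "(F2 X (Y \<odot> Z) \<cdot> (\<theta> \<otimes> (F2 Y Z \<cdot> (\<theta>' \<otimes> \<theta>'')))) \<cdot> asc M X Y Z =
     Fa (asc M X Y Z) \<cdot> (F2 (X \<odot> Y) Z \<cdot> ((F2 X Y \<cdot> (\<theta> \<otimes> \<theta>')) \<otimes> \<theta>''))"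
    by (rule g_asc[OF MF]) (use h in auto)
  have 2: "(G2 X (Y \<odot> Z) \<cdot> (\<rho> \<otimes> (G2 Y Z \<cdot> (\<rho>' \<otimes> \<rho>'')))) \<cdot> asc M X Y Z =
     Ga (asc M X Y Z) \<cdot> (G2 (X \<odot> Y) Z \<cdot> ((G2 X Y \<cdot> (\<rho> \<otimes> \<rho>')) \<otimes> \<rho>''))"
    by (rule g_asc[OF MG]) (use h in auto)
  show ?thesis unfolding TT_simp bmor_iff using h 1 2 by simp
qed

lemma bmor_lu: assumes "bcm (X, \<theta>, \<rho>)"
  shows "bmor (TT (I, F0, G0) (X, \<theta>, \<rho>)) (lu M X) (X, \<theta>, \<rho>)"
    "bmor (TT (X, \<theta>, \<rho>) (I, F0, G0)) (ru M X) (X, \<theta>, \<rho>)"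
proof -
  note h = assms[unfolded bcm_iff]
  have 1: "\<theta> \<cdot> lu M X = Fa (lu M X) \<cdot> (F2 I X \<cdot> (F0 \<otimes> \<theta>))" "\<theta> \<cdot> ru M X = Fa (ru M X) \<cdot> (F2 X I \<cdot> (\<theta> \<otimes> F0))"
    by (rule g_lu[OF MF]; use h in auto)+
  have 2: "\<rho> \<cdot> lu M X = Ga (lu M X) \<cdot> (G2 I X \<cdot> (G0 \<otimes> \<rho>))" "\<rho> \<cdot> ru M X = Ga (ru M X) \<cdot> (G2 X I \<cdot> (\<rho> \<otimes> G0))"
    by (rule g_lu[OF MG]; use h in auto)+
  show "bmor (TT (I, F0, G0) (X, \<theta>, \<rho>)) (lu M X) (X, \<theta>, \<rho>)"
    unfolding TT_simp bmor_iff using h 1 2 by simp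
  show "bmor (TT (X, \<theta>, \<rho>) (I, F0, G0)) (ru M X) (X, \<theta>, \<rho>)"
    unfolding TT_simp bmor_iff using h 1 2 by simp
qed

lemma bmor_id: "bcm (X, \<theta>, \<rho>) \<Longrightarrow> bmor (X, \<theta>, \<rho>) (id' X) (X, \<theta>, \<rho>)"
  unfolding bcm_iff bmor_iff by simp

lemma bmor_comp: assumes "bcm (X, \<theta>, \<rho>)" "bcm (Y, \<theta>', \<rho>')" "bcm (Z, \<theta>'', \<rho>'')"
  "bmor (X, \<theta>, \<rho>) f (Y, \<theta>', \<rho>')" "bmor (Y, \<theta>', \<rho>') g (Z, \<theta>'', \<rho>'')"
  shows "bmor (X, \<theta>, \<rho>) (g \<cdot> f) (Z, \<theta>'', \<rho>'')"
proof -
  note h = assms[unfolded bcm_iff bmor_iff]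
  have e1: "\<theta>'' \<cdot> g = Fa g \<cdot> \<theta>'" "\<rho>'' \<cdot> g = Ga g \<cdot> \<rho>'" using h by simp_all
  have e2: "\<theta>' \<cdot> f = Fa f \<cdot> \<theta>" "\<rho>' \<cdot> f = Ga f \<cdot> \<rho>" using h by simp_all
  show ?thesis unfolding bmor_iff using h by (simp add: ext2[OF e1(1)] ext2[OF e1(2)] ext2[OF e2(1)] ext2[OF e2(2)] e2)
qed

lemma bmor_inv: assumes "bcm (X, \<theta>, \<rho>)" "bcm (Y, \<theta>', \<rho>')" "bmor (X, \<theta>, \<rho>) f (Y, \<theta>', \<rho>')"
  and g: "g \<in> Ar'" "s g = Y" "tg g = X" "g \<cdot> f = id' X" "f \<cdot> g = id' Y"
  shows "bmor (Y, \<theta>', \<rho>') g (X, \<theta>, \<rho>)"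
proof -
  note h = assms[unfolded bcm_iff bmor_iff]
  have e: "\<theta>' \<cdot> f = Fa f \<cdot> \<theta>" "\<rho>' \<cdot> f = Ga f \<cdot> \<rho>" using h by simp_all
  have gf: "Fa g \<cdot> Fa f = id' (F1 X)" "Ga g \<cdot> Ga f = id' (G1 X)" using h by (simp_all flip: F_cmp G_cmp)
  have k1: "\<theta>' \<cdot> (f \<cdot> g) = Fa f \<cdot> (\<theta> \<cdot> g)" using ext2[OF e(1), of g] h by simp
  have k2: "\<rho>' \<cdot> (f \<cdot> g) = Ga f \<cdot> (\<rho> \<cdot> g)" using ext2[OF e(2), of g] h by simp
  have 1: "\<theta> \<cdot> g = Fa g \<cdot> \<theta>'"
  proof -
    have "Fa g \<cdot> \<theta>' = Fa g \<cdot> (Fa f \<cdot> (\<theta> \<cdot> g))" using k1 h by simp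
    also have "... = \<theta> \<cdot> g" using h by (simp add: ext2[OF gf(1)])
    finally show ?thesis by simp
  qed
  have 2: "\<rho> \<cdot> g = Ga g \<cdot> \<rho>'"
  proof -
    have "Ga g \<cdot> \<rho>' = Ga g \<cdot> (Ga f \<cdot> (\<rho> \<cdot> g))" using k2 h by simp
    also have "... = \<rho> \<cdot> g" using h by (simp add: ext2[OF gf(2)])
    finally show ?thesis by simp
  qed
  show ?thesis unfolding bmor_iff using g 1 2 by simp
qed

lemma iso_BC: assumes A: "bcm (X, \<theta>, \<rho>)" and B: "bcm (Y, \<theta>', \<rho>')" and m: "bmor (X, \<theta>, \<rho>) f (Y, \<theta>', \<rho>')"
  and i: "is_iso M f"
  shows "is_iso BC ((X, \<theta>, \<rho>), f, (Y, \<theta>', \<rho>'))"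
proof -
  have fs: "s f = X" "tg f = Y" using m unfolding bmor_iff by simp_all
  obtain g where g: "g \<in> Ar'" "s g = Y" "tg g = X" "g \<cdot> f = id' X" "f \<cdot> g = id' Y"
    using iso_inv[OF i] fs by auto
  have m2: "bmor (Y, \<theta>', \<rho>') g (X, \<theta>, \<rho>)" by (rule bmor_inv[OF A B m g])
  show ?thesis unfolding is_iso_def hom_iff
    by (rule conjI, use A B m in simp, rule bexI[of _ "((Y, \<theta>', \<rho>'), g, (X, \<theta>, \<rho>))"]) (use A B m m2 g fs in \<open>auto simp: hom_iff\<close>)
qed

lemma BC_cat: "is_category BC"
  unfolding is_category_def
proof (intro conjI ballI impI)
  fix x assume "x \<in> Ar BC"
  then obtain X \<theta> \<rho> f Y \<theta>' \<rho>' where x: "x = ((X, \<theta>, \<rho>), f, (Y, \<theta>', \<rho>'))" "bcm (X, \<theta>, \<rho>)" "bcm (Y, \<theta>', \<rho>')"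
    "bmor (X, \<theta>, \<rho>) f (Y, \<theta>', \<rho>')" by (rule ArBC_E)
  then show "src BC x \<in> Ob BC" "tgt BC x \<in> Ob BC" by simp_all
  have f: "f \<in> Ar'" "s f = X" "tg f = Y" using x(4) unfolding bmor_iff by simp_all
  show "cmp BC (idn BC (tgt BC x)) x = x" "cmp BC x (idn BC (src BC x)) = x" using x f by simp_all
next
  fix A assume "A \<in> Ob BC"
  then obtain X \<theta> \<rho> where A: "A = (X, \<theta>, \<rho>)" "bcm (X, \<theta>, \<rho>)" by (rule ObBC_E)
  then show "idn BC A \<in> hom BC A A" unfolding hom_iff using bmor_id[OF A(2)] by simp
next
  fix x y assume "x \<in> Ar BC" "y \<in> Ar BC" and xy: "tgt BC x = src BC y"
  obtain X \<theta> \<rho> f Y \<theta>' \<rho>' where x: "x = ((X, \<theta>, \<rho>), f, (Y, \<theta>', \<rho>'))" "bcm (X, \<theta>, \<rho>)" "bcm (Y, \<theta>', \<rho>')"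
    "bmor (X, \<theta>, \<rho>) f (Y, \<theta>', \<rho>')" using \<open>x \<in> Ar BC\<close> by (rule ArBC_E)
  obtain Y2 \<theta>2 \<rho>2 g Z \<theta>'' \<rho>'' where y: "y = ((Y2, \<theta>2, \<rho>2), g, (Z, \<theta>'', \<rho>''))" "bcm (Y2, \<theta>2, \<rho>2)" "bcm (Z, \<theta>'', \<rho>'')"
    "bmor (Y2, \<theta>2, \<rho>2) g (Z, \<theta>'', \<rho>'')" using \<open>y \<in> Ar BC\<close> by (rule ArBC_E)
  have e: "Y2 = Y" "\<theta>2 = \<theta>'" "\<rho>2 = \<rho>'" using xy x y by simp_all
  show "cmp BC y x \<in> hom BC (src BC x) (tgt BC y)"
    unfolding hom_iff using x y e bmor_comp[OF x(2) x(3) y(3) x(4)] by simp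
next
  fix x y z assume "x \<in> Ar BC" "y \<in> Ar BC" "z \<in> Ar BC" and xyz: "tgt BC x = src BC y \<and> tgt BC y = src BC z"
  obtain X \<theta> \<rho> f Y \<theta>' \<rho>' where x: "x = ((X, \<theta>, \<rho>), f, (Y, \<theta>', \<rho>'))" "bcm (X, \<theta>, \<rho>)" "bcm (Y, \<theta>', \<rho>')"
    "bmor (X, \<theta>, \<rho>) f (Y, \<theta>', \<rho>')" using \<open>x \<in> Ar BC\<close> by (rule ArBC_E)
  obtain Y2 \<theta>2 \<rho>2 g Z \<theta>'' \<rho>'' where y: "y = ((Y2, \<theta>2, \<rho>2), g, (Z, \<theta>'', \<rho>''))" "bcm (Y2, \<theta>2, \<rho>2)" "bcm (Z, \<theta>'', \<rho>'')"
    "bmor (Y2, \<theta>2, \<rho>2) g (Z, \<theta>'', \<rho>'')" using \<open>y \<in> Ar BC\<close> by (rule ArBC_E)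
  obtain Z2 \<theta>3 \<rho>3 h W \<theta>4 \<rho>4 where z: "z = ((Z2, \<theta>3, \<rho>3), h, (W, \<theta>4, \<rho>4))" "bcm (Z2, \<theta>3, \<rho>3)" "bcm (W, \<theta>4, \<rho>4)"
    "bmor (Z2, \<theta>3, \<rho>3) h (W, \<theta>4, \<rho>4)" using \<open>z \<in> Ar BC\<close> by (rule ArBC_E)
  have t: "f \<in> Ar'" "g \<in> Ar'" "h \<in> Ar'" "tg f = s g" "tg g = s h"
    using x y z xyz unfolding bmor_iff by auto
  show "cmp BC z (cmp BC y x) = cmp BC (cmp BC z y) x" using x y z t by simp
qed

lemma bcm_tens': assumes P: P2T and A: "bcm A" and B: "bcm B" shows "bcm (TT A B)"
  using bcm_tens[OF P] A B by (cases A; cases B) simp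

lemma BC1: assumes U: P2U shows "munit BC \<in> Ob BC" using bcm_unit[OF U] by simp

lemma BC2: assumes P: P2T shows "(\<forall>X\<in>Ob BC. \<forall>Y\<in>Ob BC. tns BC X Y \<in> Ob BC)"
proof (intro ballI)
  fix A B assume "A \<in> Ob BC" "B \<in> Ob BC"
  obtain X1 \<theta>1 \<rho>1 where A: "A = (X1, \<theta>1, \<rho>1)" "bcm (X1, \<theta>1, \<rho>1)" using \<open>A \<in> Ob BC\<close> by (rule ObBC_E)
  have At: "X1 \<in> Ob'" using A(2) unfolding bcm_iff by auto
  obtain X2 \<theta>2 \<rho>2 where B: "B = (X2, \<theta>2, \<rho>2)" "bcm (X2, \<theta>2, \<rho>2)" using \<open>B \<in> Ob BC\<close> by (rule ObBC_E)
  have Bt: "X2 \<in> Ob'" using B(2) unfolding bcm_iff by auto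
  show "tns BC A B \<in> Ob BC" using A B bcm_tens'[OF P A(2) B(2)] by simp
qed

lemma BC3: assumes P: P2T shows "(\<forall>f\<in>Ar BC. \<forall>g\<in>Ar BC. tnsa BC f g \<in> hom BC (tns BC (src BC f) (src BC g)) (tns BC (tgt BC f) (tgt BC g)))"
proof (intro ballI)
  fix x y assume "x \<in> Ar BC" "y \<in> Ar BC"
  obtain X1 \<theta>1 \<rho>1 f1 Y1 \<theta>1' \<rho>1' where x: "x = ((X1, \<theta>1, \<rho>1), f1, (Y1, \<theta>1', \<rho>1'))" "bcm (X1, \<theta>1, \<rho>1)" "bcm (Y1, \<theta>1', \<rho>1')"
    "bmor (X1, \<theta>1, \<rho>1) f1 (Y1, \<theta>1', \<rho>1')" using \<open>x \<in> Ar BC\<close> by (rule ArBC_E)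
  have xt: "f1 \<in> Ar'" "s f1 = X1" "tg f1 = Y1" "X1 \<in> Ob'" "Y1 \<in> Ob'" using x(2-4) unfolding bcm_iff bmor_iff by auto
  obtain X2 \<theta>2 \<rho>2 f2 Y2 \<theta>2' \<rho>2' where y: "y = ((X2, \<theta>2, \<rho>2), f2, (Y2, \<theta>2', \<rho>2'))" "bcm (X2, \<theta>2, \<rho>2)" "bcm (Y2, \<theta>2', \<rho>2')"
    "bmor (X2, \<theta>2, \<rho>2) f2 (Y2, \<theta>2', \<rho>2')" using \<open>y \<in> Ar BC\<close> by (rule ArBC_E)
  have yt: "f2 \<in> Ar'" "s f2 = X2" "tg f2 = Y2" "X2 \<in> Ob'" "Y2 \<in> Ob'" using y(2-4) unfolding bcm_iff bmor_iff by auto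
  show "tnsa BC x y \<in> hom BC (tns BC (src BC x) (src BC y)) (tns BC (tgt BC x) (tgt BC y))"
    unfolding hom_iff using x y bcm_tens'[OF P x(2) y(2)] bcm_tens'[OF P x(3) y(3)] bmor_tnsa[OF x(2) y(2) x(3) y(3) x(4) y(4)] by simp
qed

lemma BC4: shows "(\<forall>X\<in>Ob BC. \<forall>Y\<in>Ob BC. tnsa BC (idn BC X) (idn BC Y) = idn BC (tns BC X Y))"
proof (intro ballI)
  fix A B assume "A \<in> Ob BC" "B \<in> Ob BC"
  obtain X1 \<theta>1 \<rho>1 where A: "A = (X1, \<theta>1, \<rho>1)" "bcm (X1, \<theta>1, \<rho>1)" using \<open>A \<in> Ob BC\<close> by (rule ObBC_E)
  have At: "X1 \<in> Ob'" using A(2) unfolding bcm_iff by auto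
  obtain X2 \<theta>2 \<rho>2 where B: "B = (X2, \<theta>2, \<rho>2)" "bcm (X2, \<theta>2, \<rho>2)" using \<open>B \<in> Ob BC\<close> by (rule ObBC_E)
  have Bt: "X2 \<in> Ob'" using B(2) unfolding bcm_iff by auto
  show "tnsa BC (idn BC A) (idn BC B) = idn BC (tns BC A B)" using A B At Bt by simp
qed

lemma BC5: shows "(\<forall>f\<in>Ar BC. \<forall>g\<in>Ar BC. \<forall>f'\<in>Ar BC. \<forall>g'\<in>Ar BC. tgt BC f = src BC g \<and> tgt BC f' = src BC g' \<longrightarrow>
        tnsa BC (cmp BC g f) (cmp BC g' f') = cmp BC (tnsa BC g g') (tnsa BC f f'))"
proof (intro ballI impI)
  fix x y x2 y2 assume "x \<in> Ar BC" "y \<in> Ar BC" "x2 \<in> Ar BC" "y2 \<in> Ar BC"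
    and c: "tgt BC x = src BC y \<and> tgt BC x2 = src BC y2"
  obtain X1 \<theta>1 \<rho>1 f1 Y1 \<theta>1' \<rho>1' where x: "x = ((X1, \<theta>1, \<rho>1), f1, (Y1, \<theta>1', \<rho>1'))" "bcm (X1, \<theta>1, \<rho>1)" "bcm (Y1, \<theta>1', \<rho>1')"
    "bmor (X1, \<theta>1, \<rho>1) f1 (Y1, \<theta>1', \<rho>1')" using \<open>x \<in> Ar BC\<close> by (rule ArBC_E)
  have xt: "f1 \<in> Ar'" "s f1 = X1" "tg f1 = Y1" "X1 \<in> Ob'" "Y1 \<in> Ob'" using x(2-4) unfolding bcm_iff bmor_iff by auto
  obtain X2 \<theta>2 \<rho>2 f2 Y2 \<theta>2' \<rho>2' where y: "y = ((X2, \<theta>2, \<rho>2), f2, (Y2, \<theta>2', \<rho>2'))" "bcm (X2, \<theta>2, \<rho>2)" "bcm (Y2, \<theta>2', \<rho>2')"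
    "bmor (X2, \<theta>2, \<rho>2) f2 (Y2, \<theta>2', \<rho>2')" using \<open>y \<in> Ar BC\<close> by (rule ArBC_E)
  have yt: "f2 \<in> Ar'" "s f2 = X2" "tg f2 = Y2" "X2 \<in> Ob'" "Y2 \<in> Ob'" using y(2-4) unfolding bcm_iff bmor_iff by auto
  obtain X3 \<theta>3 \<rho>3 f3 Y3 \<theta>3' \<rho>3' where x2: "x2 = ((X3, \<theta>3, \<rho>3), f3, (Y3, \<theta>3', \<rho>3'))" "bcm (X3, \<theta>3, \<rho>3)" "bcm (Y3, \<theta>3', \<rho>3')"
    "bmor (X3, \<theta>3, \<rho>3) f3 (Y3, \<theta>3', \<rho>3')" using \<open>x2 \<in> Ar BC\<close> by (rule ArBC_E)
  have x2t: "f3 \<in> Ar'" "s f3 = X3" "tg f3 = Y3" "X3 \<in> Ob'" "Y3 \<in> Ob'" using x2(2-4) unfolding bcm_iff bmor_iff by auto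
  obtain X4 \<theta>4 \<rho>4 f4 Y4 \<theta>4' \<rho>4' where y2: "y2 = ((X4, \<theta>4, \<rho>4), f4, (Y4, \<theta>4', \<rho>4'))" "bcm (X4, \<theta>4, \<rho>4)" "bcm (Y4, \<theta>4', \<rho>4')"
    "bmor (X4, \<theta>4, \<rho>4) f4 (Y4, \<theta>4', \<rho>4')" using \<open>y2 \<in> Ar BC\<close> by (rule ArBC_E)
  have y2t: "f4 \<in> Ar'" "s f4 = X4" "tg f4 = Y4" "X4 \<in> Ob'" "Y4 \<in> Ob'" using y2(2-4) unfolding bcm_iff bmor_iff by auto
  show "tnsa BC (cmp BC y x) (cmp BC y2 x2) = cmp BC (tnsa BC y y2) (tnsa BC x x2)"
    using x y x2 y2 xt yt x2t y2t c by (simp add: interchange)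
qed

lemma BC6: assumes P: P2T shows "(\<forall>X\<in>Ob BC. \<forall>Y\<in>Ob BC. \<forall>Z\<in>Ob BC.
        asc BC X Y Z \<in> hom BC (tns BC (tns BC X Y) Z) (tns BC X (tns BC Y Z)) \<and> is_iso BC (asc BC X Y Z))"
proof (intro ballI)
  fix A B C assume "A \<in> Ob BC" "B \<in> Ob BC" "C \<in> Ob BC"
  obtain X1 \<theta>1 \<rho>1 where A: "A = (X1, \<theta>1, \<rho>1)" "bcm (X1, \<theta>1, \<rho>1)" using \<open>A \<in> Ob BC\<close> by (rule ObBC_E)
  have At: "X1 \<in> Ob'" using A(2) unfolding bcm_iff by auto
  obtain X2 \<theta>2 \<rho>2 where B: "B = (X2, \<theta>2, \<rho>2)" "bcm (X2, \<theta>2, \<rho>2)" using \<open>B \<in> Ob BC\<close> by (rule ObBC_E)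
  have Bt: "X2 \<in> Ob'" using B(2) unfolding bcm_iff by auto
  obtain X3 \<theta>3 \<rho>3 where C: "C = (X3, \<theta>3, \<rho>3)" "bcm (X3, \<theta>3, \<rho>3)" using \<open>C \<in> Ob BC\<close> by (rule ObBC_E)
  have Ct: "X3 \<in> Ob'" using C(2) unfolding bcm_iff by auto
  have m: "bmor (TT (TT A B) C) (asc M X1 X2 X3) (TT A (TT B C))" using A B C bmor_asc[OF A(2) B(2) C(2)] by simp
  have b1: "bcm (TT (TT A B) C)" using A B C bcm_tens'[OF P bcm_tens'[OF P A(2) B(2)] C(2)] by simp
  have b2: "bcm (TT A (TT B C))" using A B C bcm_tens'[OF P A(2) bcm_tens'[OF P B(2) C(2)]] by simp
  have i: "is_iso BC (TT (TT A B) C, asc M X1 X2 X3, TT A (TT B C))"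
    using iso_BC[of _ _ _ _ _ _ "asc M X1 X2 X3"] asc_iso[OF At Bt Ct] m b1 b2 A B C by simp
  show "asc BC A B C \<in> hom BC (tns BC (tns BC A B) C) (tns BC A (tns BC B C)) \<and> is_iso BC (asc BC A B C)"
    unfolding hom_iff using A B C m b1 b2 i by simp
qed

lemma BC7: assumes P: P2T and U: P2U shows "(\<forall>X\<in>Ob BC. lu BC X \<in> hom BC (tns BC (munit BC) X) X \<and> is_iso BC (lu BC X) \<and>
                ru BC X \<in> hom BC (tns BC X (munit BC)) X \<and> is_iso BC (ru BC X))"
proof (intro ballI)
  fix A assume "A \<in> Ob BC"
  obtain X1 \<theta>1 \<rho>1 where A: "A = (X1, \<theta>1, \<rho>1)" "bcm (X1, \<theta>1, \<rho>1)" using \<open>A \<in> Ob BC\<close> by (rule ObBC_E)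
  have At: "X1 \<in> Ob'" using A(2) unfolding bcm_iff by auto
  have m: "bmor (TT (I, F0, G0) A) (lu M X1) A" "bmor (TT A (I, F0, G0)) (ru M X1) A" using A bmor_lu[OF A(2)] by simp_all
  have b1: "bcm (TT (I, F0, G0) A)" using A bcm_tens'[OF P bcm_unit[OF U] A(2)] by simp
  have b2: "bcm (TT A (I, F0, G0))" using A bcm_tens'[OF P A(2) bcm_unit[OF U]] by simp
  have i1: "is_iso BC (TT (I, F0, G0) A, lu M X1, A)"
    using iso_BC[of _ _ _ _ _ _ "lu M X1"] lu_iso(1)[OF At] m b1 A by simp
  have i2: "is_iso BC (TT A (I, F0, G0), ru M X1, A)"
    using iso_BC[of _ _ _ _ _ _ "ru M X1"] lu_iso(2)[OF At] m b2 A by simp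
  show "lu BC A \<in> hom BC (tns BC (munit BC) A) A \<and> is_iso BC (lu BC A) \<and>
                ru BC A \<in> hom BC (tns BC A (munit BC)) A \<and> is_iso BC (ru BC A)"
    unfolding hom_iff using A m b1 b2 i1 i2 by simp
qed

lemma BC9: shows "(\<forall>f\<in>Ar BC. \<forall>g\<in>Ar BC. \<forall>h\<in>Ar BC.
        cmp BC (asc BC (tgt BC f) (tgt BC g) (tgt BC h)) (tnsa BC (tnsa BC f g) h) =
        cmp BC (tnsa BC f (tnsa BC g h)) (asc BC (src BC f) (src BC g) (src BC h)))"
proof (intro ballI)
  fix x y z assume "x \<in> Ar BC" "y \<in> Ar BC" "z \<in> Ar BC"
  obtain X1 \<theta>1 \<rho>1 f1 Y1 \<theta>1' \<rho>1' where x: "x = ((X1, \<theta>1, \<rho>1), f1, (Y1, \<theta>1', \<rho>1'))" "bcm (X1, \<theta>1, \<rho>1)" "bcm (Y1, \<theta>1', \<rho>1')"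
    "bmor (X1, \<theta>1, \<rho>1) f1 (Y1, \<theta>1', \<rho>1')" using \<open>x \<in> Ar BC\<close> by (rule ArBC_E)
  have xt: "f1 \<in> Ar'" "s f1 = X1" "tg f1 = Y1" "X1 \<in> Ob'" "Y1 \<in> Ob'" using x(2-4) unfolding bcm_iff bmor_iff by auto
  obtain X2 \<theta>2 \<rho>2 f2 Y2 \<theta>2' \<rho>2' where y: "y = ((X2, \<theta>2, \<rho>2), f2, (Y2, \<theta>2', \<rho>2'))" "bcm (X2, \<theta>2, \<rho>2)" "bcm (Y2, \<theta>2', \<rho>2')"
    "bmor (X2, \<theta>2, \<rho>2) f2 (Y2, \<theta>2', \<rho>2')" using \<open>y \<in> Ar BC\<close> by (rule ArBC_E)
  have yt: "f2 \<in> Ar'" "s f2 = X2" "tg f2 = Y2" "X2 \<in> Ob'" "Y2 \<in> Ob'" using y(2-4) unfolding bcm_iff bmor_iff by auto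
  obtain X3 \<theta>3 \<rho>3 f3 Y3 \<theta>3' \<rho>3' where z: "z = ((X3, \<theta>3, \<rho>3), f3, (Y3, \<theta>3', \<rho>3'))" "bcm (X3, \<theta>3, \<rho>3)" "bcm (Y3, \<theta>3', \<rho>3')"
    "bmor (X3, \<theta>3, \<rho>3) f3 (Y3, \<theta>3', \<rho>3')" using \<open>z \<in> Ar BC\<close> by (rule ArBC_E)
  have zt: "f3 \<in> Ar'" "s f3 = X3" "tg f3 = Y3" "X3 \<in> Ob'" "Y3 \<in> Ob'" using z(2-4) unfolding bcm_iff bmor_iff by auto
  show "cmp BC (asc BC (tgt BC x) (tgt BC y) (tgt BC z)) (tnsa BC (tnsa BC x y) z) =
        cmp BC (tnsa BC x (tnsa BC y z)) (asc BC (src BC x) (src BC y) (src BC z))"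
    using x y z xt yt zt asc_nat[of f1 f2 f3] by simp
qed

lemma BC10: shows "(\<forall>f\<in>Ar BC. cmp BC (lu BC (tgt BC f)) (tnsa BC (idn BC (munit BC)) f) = cmp BC f (lu BC (src BC f)) \<and>
                cmp BC (ru BC (tgt BC f)) (tnsa BC f (idn BC (munit BC))) = cmp BC f (ru BC (src BC f)))"
proof (intro ballI)
  fix x assume "x \<in> Ar BC"
  obtain X1 \<theta>1 \<rho>1 f1 Y1 \<theta>1' \<rho>1' where x: "x = ((X1, \<theta>1, \<rho>1), f1, (Y1, \<theta>1', \<rho>1'))" "bcm (X1, \<theta>1, \<rho>1)" "bcm (Y1, \<theta>1', \<rho>1')"
    "bmor (X1, \<theta>1, \<rho>1) f1 (Y1, \<theta>1', \<rho>1')" using \<open>x \<in> Ar BC\<close> by (rule ArBC_E)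
  have xt: "f1 \<in> Ar'" "s f1 = X1" "tg f1 = Y1" "X1 \<in> Ob'" "Y1 \<in> Ob'" using x(2-4) unfolding bcm_iff bmor_iff by auto
  show "cmp BC (lu BC (tgt BC x)) (tnsa BC (idn BC (munit BC)) x) = cmp BC x (lu BC (src BC x)) \<and>
                cmp BC (ru BC (tgt BC x)) (tnsa BC x (idn BC (munit BC))) = cmp BC x (ru BC (src BC x))"
    using x xt lu_nat[of f1] by simp
qed

lemma BC12: shows "(\<forall>W\<in>Ob BC. \<forall>X\<in>Ob BC. \<forall>Y\<in>Ob BC. \<forall>Z\<in>Ob BC.
        cmp BC (tnsa BC (idn BC W) (asc BC X Y Z))
          (cmp BC (asc BC W (tns BC X Y) Z) (tnsa BC (asc BC W X Y) (idn BC Z))) =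
        cmp BC (asc BC W X (tns BC Y Z)) (asc BC (tns BC W X) Y Z))"
proof (intro ballI)
  fix A B C D assume "A \<in> Ob BC" "B \<in> Ob BC" "C \<in> Ob BC" "D \<in> Ob BC"
  obtain X1 \<theta>1 \<rho>1 where A: "A = (X1, \<theta>1, \<rho>1)" "bcm (X1, \<theta>1, \<rho>1)" using \<open>A \<in> Ob BC\<close> by (rule ObBC_E)
  have At: "X1 \<in> Ob'" using A(2) unfolding bcm_iff by auto
  obtain X2 \<theta>2 \<rho>2 where B: "B = (X2, \<theta>2, \<rho>2)" "bcm (X2, \<theta>2, \<rho>2)" using \<open>B \<in> Ob BC\<close> by (rule ObBC_E)
  have Bt: "X2 \<in> Ob'" using B(2) unfolding bcm_iff by auto
  obtain X3 \<theta>3 \<rho>3 where C: "C = (X3, \<theta>3, \<rho>3)" "bcm (X3, \<theta>3, \<rho>3)" using \<open>C \<in> Ob BC\<close> by (rule ObBC_E)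
  have Ct: "X3 \<in> Ob'" using C(2) unfolding bcm_iff by auto
  obtain X4 \<theta>4 \<rho>4 where D: "D = (X4, \<theta>4, \<rho>4)" "bcm (X4, \<theta>4, \<rho>4)" using \<open>D \<in> Ob BC\<close> by (rule ObBC_E)
  have Dt: "X4 \<in> Ob'" using D(2) unfolding bcm_iff by auto
  show "cmp BC (tnsa BC (idn BC A) (asc BC B C D))
          (cmp BC (asc BC A (tns BC B C) D) (tnsa BC (asc BC A B C) (idn BC D))) =
        cmp BC (asc BC A B (tns BC C D)) (asc BC (tns BC A B) C D)"
    using A B C D At Bt Ct Dt M12 by simp
qed

lemma BC13: shows "(\<forall>X\<in>Ob BC. \<forall>Y\<in>Ob BC.
        cmp BC (tnsa BC (idn BC X) (lu BC Y)) (asc BC X (munit BC) Y) = tnsa BC (ru BC X) (idn BC Y))"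
proof (intro ballI)
  fix A B assume "A \<in> Ob BC" "B \<in> Ob BC"
  obtain X1 \<theta>1 \<rho>1 where A: "A = (X1, \<theta>1, \<rho>1)" "bcm (X1, \<theta>1, \<rho>1)" using \<open>A \<in> Ob BC\<close> by (rule ObBC_E)
  have At: "X1 \<in> Ob'" using A(2) unfolding bcm_iff by auto
  obtain X2 \<theta>2 \<rho>2 where B: "B = (X2, \<theta>2, \<rho>2)" "bcm (X2, \<theta>2, \<rho>2)" using \<open>B \<in> Ob BC\<close> by (rule ObBC_E)
  have Bt: "X2 \<in> Ob'" using B(2) unfolding bcm_iff by auto
  show "cmp BC (tnsa BC (idn BC A) (lu BC B)) (asc BC A (munit BC) B) = tnsa BC (ru BC A) (idn BC B)"
    using A B At Bt M13 by simp
qed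

lemma P2_P1: assumes P: P2T and U: P2U shows "monoidal_category BC"
  using BC_cat BC1[OF U] BC2[OF P] BC3[OF P] BC4 BC5 BC6[OF P] BC7[OF P U] BC9 BC10 BC12 BC13
  unfolding monoidal_category_def by (intro conjI) assumption+



lemma cof_bcm: assumes X: "X \<in> Ob'"
  shows "bcm (F1 (G1 X), DF (G1 X), \<phi> (G1 X) \<cdot> Fa (dG X))"
proof -
  have c: "\<phi> (F1 (G1 X)) \<cdot> (Fa (\<phi> (G1 X) \<cdot> Fa (dG X)) \<cdot> DF (G1 X)) = Ga (DF (G1 X)) \<cdot> (\<phi> (G1 X) \<cdot> Fa (dG X))"
    using X by (simp add: ext2[OF phi_D[symmetric]] DF_natL)
  show ?thesis unfolding bcm_iff using X c K1[OF X] Gcu1F[OF X] F_coass F_cu1 by (simp add: ext2[OF phi_eG])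
qed

lemma P1_P2T: assumes T: "\<forall>A\<in>Ob BC. \<forall>B\<in>Ob BC. tns BC A B \<in> Ob BC" and X: "X \<in> Ob'" and Y: "Y \<in> Ob'"
  shows "\<phi> (X \<odot> Y) \<cdot> (Fa (G2 X Y) \<cdot> F2 (G1 X) (G1 Y)) = Ga (F2 X Y) \<cdot> (G2 (F1 X) (F1 Y) \<cdot> (\<phi> X \<otimes> \<phi> Y))"
proof -
  define \<theta> where "\<theta> = DF (G1 X)"
  define \<theta>' where "\<theta>' = DF (G1 Y)"
  define \<rho> where "\<rho> = \<phi> (G1 X) \<cdot> Fa (dG X)"
  define \<rho>' where "\<rho>' = \<phi> (G1 Y) \<cdot> Fa (dG Y)"
  have ty[simp]: "\<theta> \<in> Ar'" "s \<theta> = F1 (G1 X)" "tg \<theta> = F1 (F1 (G1 X))"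
    "\<theta>' \<in> Ar'" "s \<theta>' = F1 (G1 Y)" "tg \<theta>' = F1 (F1 (G1 Y))"
    "\<rho> \<in> Ar'" "s \<rho> = F1 (G1 X)" "tg \<rho> = G1 (F1 (G1 X))"
    "\<rho>' \<in> Ar'" "s \<rho>' = F1 (G1 Y)" "tg \<rho>' = G1 (F1 (G1 Y))"
    unfolding \<theta>_def \<theta>'_def \<rho>_def \<rho>'_def using X Y by simp_all
  have cu: "Fa (eF (G1 X)) \<cdot> \<theta> = id' (F1 (G1 X))" "Fa (eF (G1 Y)) \<cdot> \<theta>' = id' (F1 (G1 Y))"
    unfolding \<theta>_def \<theta>'_def using X Y F_cu2 by simp_all
  have "bcm (TT (F1 (G1 X), \<theta>, \<rho>) (F1 (G1 Y), \<theta>', \<rho>'))"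
    using T cof_bcm[OF X] cof_bcm[OF Y] unfolding \<theta>_def \<theta>'_def \<rho>_def \<rho>'_def by simp
  then have E: "\<phi> (F1 (G1 X) \<odot> F1 (G1 Y)) \<cdot> (Fa (G2 (F1 (G1 X)) (F1 (G1 Y)) \<cdot> (\<rho> \<otimes> \<rho>')) \<cdot> (F2 (F1 (G1 X)) (F1 (G1 Y)) \<cdot> (\<theta> \<otimes> \<theta>'))) =
      Ga (F2 (F1 (G1 X)) (F1 (G1 Y)) \<cdot> (\<theta> \<otimes> \<theta>')) \<cdot> (G2 (F1 (G1 X)) (F1 (G1 Y)) \<cdot> (\<rho> \<otimes> \<rho>'))"
    unfolding TT_simp bcm_iff by blast
  let ?q = "(eG X \<cdot> eF (G1 X)) \<otimes> (eG Y \<cdot> eF (G1 Y))"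
  have E2: "Ga (Fa ?q) \<cdot> (\<phi> (F1 (G1 X) \<odot> F1 (G1 Y)) \<cdot> (Fa (G2 (F1 (G1 X)) (F1 (G1 Y)) \<cdot> (\<rho> \<otimes> \<rho>')) \<cdot> (F2 (F1 (G1 X)) (F1 (G1 Y)) \<cdot> (\<theta> \<otimes> \<theta>')))) =
     Ga (Fa ?q) \<cdot> (Ga (F2 (F1 (G1 X)) (F1 (G1 Y)) \<cdot> (\<theta> \<otimes> \<theta>')) \<cdot> (G2 (F1 (G1 X)) (F1 (G1 Y)) \<cdot> (\<rho> \<otimes> \<rho>')))" using E by simp
  have r1: "(Ga (eG X \<cdot> eF (G1 X)) \<otimes> Ga (eG Y \<cdot> eF (G1 Y))) \<cdot> (\<rho> \<otimes> \<rho>') = eF (G1 X) \<otimes> eF (G1 Y)"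
    unfolding \<rho>_def \<rho>'_def using X Y
    by (simp add: tens2 ext2[OF phi_eF] eF_natL ext2[OF G_cu2])
  have h1: "Fa (Ga ?q) \<cdot> Fa (G2 (F1 (G1 X)) (F1 (G1 Y))) = Fa (G2 X Y) \<cdot> Fa (Ga (eG X \<cdot> eF (G1 X)) \<otimes> Ga (eG Y \<cdot> eF (G1 Y)))"
    using X Y by (simp flip: F_cmp G_cmp add: G2_natR)
  have h2: "Fa (Ga (eG X \<cdot> eF (G1 X)) \<otimes> Ga (eG Y \<cdot> eF (G1 Y))) \<cdot> Fa (\<rho> \<otimes> \<rho>') = Fa (eF (G1 X) \<otimes> eF (G1 Y))"
    using X Y r1 by (simp flip: F_cmp del: G_cmp)
  have g1: "Ga (eG X \<cdot> eF (G1 X)) \<cdot> \<rho> = eF (G1 X)" "Ga (eG Y \<cdot> eF (G1 Y)) \<cdot> \<rho>' = eF (G1 Y)"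
    unfolding \<rho>_def \<rho>'_def using X Y by (simp_all add: ext2[OF phi_eF] eF_natL ext2[OF G_cu2])
  have g2: "Fa (Ga (eG X \<cdot> eF (G1 X))) \<cdot> Fa \<rho> = Fa (eF (G1 X))" "Fa (Ga (eG Y \<cdot> eF (G1 Y))) \<cdot> Fa \<rho>' = Fa (eF (G1 Y))"
    using Flift[OF g1(1)] Flift[OF g1(2)] X Y by (simp_all del: G_cmp)
  have rr2: "Fa (Ga (eG X \<cdot> eF (G1 X))) \<cdot> (Fa \<rho> \<cdot> \<theta>) = id' (F1 (G1 X))"
     "Fa (Ga (eG Y \<cdot> eF (G1 Y))) \<cdot> (Fa \<rho>' \<cdot> \<theta>') = id' (F1 (G1 Y))"
    using X Y by (simp_all add: ext2[OF g2(1)] ext2[OF g2(2)] cu del: G_cmp)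
  have L: "Ga (Fa ?q) \<cdot> (\<phi> (F1 (G1 X) \<odot> F1 (G1 Y)) \<cdot> (Fa (G2 (F1 (G1 X)) (F1 (G1 Y)) \<cdot> (\<rho> \<otimes> \<rho>')) \<cdot> (F2 (F1 (G1 X)) (F1 (G1 Y)) \<cdot> (\<theta> \<otimes> \<theta>')))) =
      \<phi> (X \<odot> Y) \<cdot> (Fa (G2 X Y) \<cdot> F2 (G1 X) (G1 Y))"
    using X Y
    by (simp add: ext2[OF phi_natR] ext2[OF h1] F2_natR ext2[OF F2_natR] tens2 rr2
       del: G_cmp)
  have r2: "Fa ?q \<cdot> (F2 (F1 (G1 X)) (F1 (G1 Y)) \<cdot> (\<theta> \<otimes> \<theta>')) = F2 X Y \<cdot> (Fa (eG X) \<otimes> Fa (eG Y))"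
    using X Y by (simp add: F2_natR ext2[OF F2_natR] tens2 cu ext2[OF cu(1)] ext2[OF cu(2)])
  have h3: "Ga (Fa ?q) \<cdot> (Ga (F2 (F1 (G1 X)) (F1 (G1 Y))) \<cdot> Ga (\<theta> \<otimes> \<theta>')) = Ga (F2 X Y) \<cdot> Ga (Fa (eG X) \<otimes> Fa (eG Y))"
  proof -
    have "Ga (Fa ?q) \<cdot> (Ga (F2 (F1 (G1 X)) (F1 (G1 Y))) \<cdot> Ga (\<theta> \<otimes> \<theta>')) = Ga (Fa ?q \<cdot> (F2 (F1 (G1 X)) (F1 (G1 Y)) \<cdot> (\<theta> \<otimes> \<theta>')))"
      using X Y by (simp del: F_cmp)
    also have "... = Ga (F2 X Y \<cdot> (Fa (eG X) \<otimes> Fa (eG Y)))" by (simp only: r2)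
    finally show ?thesis using X Y by simp
  qed
  have rr: "Ga (Fa (eG X)) \<cdot> \<rho> = \<phi> X" "Ga (Fa (eG Y)) \<cdot> \<rho>' = \<phi> Y"
    unfolding \<rho>_def \<rho>'_def using X Y by (simp_all add: ext2[OF phi_natR] Gcu2F)
  have h4: "Ga (Fa ?q) \<cdot> Ga (F2 (F1 (G1 X)) (F1 (G1 Y))) = Ga (F2 X Y) \<cdot> Ga (Fa (eG X \<cdot> eF (G1 X)) \<otimes> Fa (eG Y \<cdot> eF (G1 Y)))"
    using X Y by (simp flip: G_cmp add: F2_natR del: F_cmp)
  have f1: "Fa (eG X \<cdot> eF (G1 X)) \<cdot> \<theta> = Fa (eG X)" "Fa (eG Y \<cdot> eF (G1 Y)) \<cdot> \<theta>' = Fa (eG Y)"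
    using X Y by (simp_all add: cu ext2[OF cu(1)] ext2[OF cu(2)])
  have f2: "Ga (Fa (eG X \<cdot> eF (G1 X))) \<cdot> Ga \<theta> = Ga (Fa (eG X))" "Ga (Fa (eG Y \<cdot> eF (G1 Y))) \<cdot> Ga \<theta>' = Ga (Fa (eG Y))"
    using Glift[OF f1(1)] Glift[OF f1(2)] X Y by (simp_all del: F_cmp)
  have rr3: "Ga (Fa (eG X \<cdot> eF (G1 X))) \<cdot> (Ga \<theta> \<cdot> \<rho>) = \<phi> X" "Ga (Fa (eG Y \<cdot> eF (G1 Y))) \<cdot> (Ga \<theta>' \<cdot> \<rho>') = \<phi> Y"
    using X Y by (simp_all add: ext2[OF f2(1)] ext2[OF f2(2)] rr del: F_cmp)
  have R: "Ga (Fa ?q) \<cdot> (Ga (F2 (F1 (G1 X)) (F1 (G1 Y)) \<cdot> (\<theta> \<otimes> \<theta>')) \<cdot> (G2 (F1 (G1 X)) (F1 (G1 Y)) \<cdot> (\<rho> \<otimes> \<rho>'))) =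
      Ga (F2 X Y) \<cdot> (G2 (F1 X) (F1 Y) \<cdot> (\<phi> X \<otimes> \<phi> Y))"
    using X Y by (simp add: h4 ext2[OF h4] G2_natR ext2[OF G2_natR] tens2 rr3 del: F_cmp)
  show ?thesis using E2 L R by simp
qed

lemma P1_iff: "monoidal_category BC \<longleftrightarrow> P2T \<and> P2U"
proof
  assume MB: "monoidal_category BC"
  have T: "\<forall>A\<in>Ob BC. \<forall>B\<in>Ob BC. tns BC A B \<in> Ob BC" using MB unfolding monoidal_category_def by (elim conjE) assumption
  have U: "munit BC \<in> Ob BC" using MB unfolding monoidal_category_def by (elim conjE) assumption
  have "P2U" using U by (simp add: bcm_iff)
  moreover have "P2T" using P1_P2T[OF T] by blast
  ultimately show "P2T \<and> P2U" by blast
next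
  assume "P2T \<and> P2U" then show "monoidal_category BC" using P2_P1 by blast
qed

end

theorem theorem3p5:
  fixes M :: "('o,'a) moncat"
    and F :: "('o,'a,'o,'a) ftr" and DF eF :: "'o \<Rightarrow> 'a" and F2 :: "'o \<Rightarrow> 'o \<Rightarrow> 'a" and F0 :: 'a
    and G :: "('o,'a,'o,'a) ftr" and dG eG :: "'o \<Rightarrow> 'a" and G2 :: "'o \<Rightarrow> 'o \<Rightarrow> 'a" and G0 :: 'a
    and \<phi> :: "'o \<Rightarrow> 'a"
  assumes "monoidal_category M"
    and "bicomonad M F DF eF F2 F0"
    and "bicomonad M G dG eG G2 G0"
    and "dist_law M F DF eF G dG eG \<phi>"
  defines "P1 \<equiv> monoidal_category (bicomod_moncat M F DF eF F2 F0 G dG eG G2 G0 \<phi>)"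
    and "P2 \<equiv> monoidal_dist_law M F F2 F0 G G2 G0 \<phi>"
    and "P3 \<equiv> bicomonad M (fcomp F G) (smash_comult M F DF G dG \<phi>) (smash_counit M eF G eG)
                 (smash_F2 M F F2 G G2) (smash_F0 M F F0 G0)"
    and "P4 \<equiv>
           cmd_2cell (prod_cat M M) (prod_ftr G G) (prod_nt dG dG) (prod_nt eG eG) M G dG eG
             (fcomp (tens_ftr M) (prod_ftr F F))
             (\<lambda>(X, Y). cmp M (G2 (fo F X) (fo F Y)) (tnsa M (\<phi> X) (\<phi> Y)))
             (fcomp F (tens_ftr M))
             (\<lambda>(X, Y). cmp M (\<phi> (tns M X Y)) (fa F (G2 X Y)))
             (\<lambda>(X, Y). F2 X Y)
         \<and> cmd_2cell term_cat id_ftr (\<lambda>_. ()) (\<lambda>_. ()) M G dG eG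
             (unit_ftr M) (\<lambda>_. G0)
             (fcomp F (unit_ftr M)) (\<lambda>_. cmp M (\<phi> (munit M)) (fa F G0))
             (\<lambda>_. F0)"
    and "P5 \<equiv>
           cc_1cell (prod_cat M M) (prod_ftr F F) (prod_nt DF DF) (prod_nt eF eF)
             (prod_ftr G G) (prod_nt dG dG) (prod_nt eG eG) (prod_nt \<phi> \<phi>)
             M F DF eF G dG eG \<phi>
             (tens_ftr M) (\<lambda>(X, Y). F2 X Y) (\<lambda>(X, Y). G2 X Y)
         \<and> cc_1cell term_cat id_ftr (\<lambda>_. ()) (\<lambda>_. ()) id_ftr (\<lambda>_. ()) (\<lambda>_. ()) (\<lambda>_. ())
             M F DF eF G dG eG \<phi>
             (unit_ftr M) (\<lambda>_. F0) (\<lambda>_. G0)"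
  shows "(P1 \<longleftrightarrow> P2) \<and> (P2 \<longleftrightarrow> P3) \<and> (P3 \<longleftrightarrow> P4) \<and> (P4 \<longleftrightarrow> P5)"
proof -
  have L: "th35 M F DF eF F2 F0 G dG eG G2 G0 \<phi>" unfolding th35_def using assms by blast
  show ?thesis unfolding P1_def P2_def P3_def P4_def P5_def
    using th35.P1_iff[OF L] th35.P2_iff[OF L] th35.P3_iff[OF L] th35.P4_iff[OF L] th35.P5_iff[OF L]
    by blast
qed

end
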